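(* Let $G$ be a finite non-cyclic abelian $p$-group. Then $\Delta_D(G)=\mathcal{P}_e(G)$ if and only if $G$ is elementary abelian.
   Context: The enhanced power graph $\mathcal{P}_e(G)$ has vertex set $G$ with distinct $x,y$ adjacent iff $\langle x,y\rangle$ is cyclic. The deep commuting graph $\Delta_D(G)$ has vertex set $G$, distinct vertices adjacent iff their preimages commute in a Schur cover $\tilde G$ of $G$ (a central extension $\{e\}\to M(G)\to\tilde G\to G\to\{e\}$ with kernel contained in $Z(\tilde G)\cap[\tilde G,\tilde G]$, of maximal order; $M(G)$ the Schur multiplier). An elementary abelian $p$-group is one in which every non-identity element has order $p$. *)

theory Defs
  imports "HOL-Algebra.Algebra"
begin

definition group_center :: "('a, 'b) monoid_scheme \<Rightarrow> 'a set" where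
  "group_center H = {z \<in> carrier H. \<forall>g \<in> carrier H. z \<otimes>\<^bsub>H\<^esub> g = g \<otimes>\<^bsub>H\<^esub> z}"

text \<open>The covering groups
  are represented with carrier in nat (every finite group is isomorphic to one).\<close>
definition stem_extension :: "('a, 'b) monoid_scheme \<Rightarrow> nat monoid \<Rightarrow> (nat \<Rightarrow> 'a) \<Rightarrow> bool" where
  "stem_extension G H \<pi> \<longleftrightarrow>
     group H \<and> finite (carrier H) \<and> \<pi> \<in> hom H G \<and> \<pi> ` carrier H = carrier G \<and>
     kernel H G \<pi> \<subseteq> group_center H \<and> kernel H G \<pi> \<subseteq> derived H (carrier H)"

text \<open>A Schur cover: a stem extension of maximal order (its kernel is then M(G)).\<close>
definition schur_cover :: "('a, 'b) monoid_scheme \<Rightarrow> nat monoid \<Rightarrow> (nat \<Rightarrow> 'a) \<Rightarrow> bool" where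
  "schur_cover G H \<pi> \<longleftrightarrow> stem_extension G H \<pi> \<and>
     (\<forall>(K :: nat monoid) \<psi>. stem_extension G K \<psi> \<longrightarrow> order K \<le> order H)"

definition enhanced_power_adj :: "('a, 'b) monoid_scheme \<Rightarrow> 'a \<Rightarrow> 'a \<Rightarrow> bool" where
  "enhanced_power_adj G x y \<longleftrightarrow> x \<noteq> y \<and> cyclic_group (subgroup_generated G {x, y})"

definition deep_commuting_adj ::
  "('a, 'b) monoid_scheme \<Rightarrow> nat monoid \<Rightarrow> (nat \<Rightarrow> 'a) \<Rightarrow> 'a \<Rightarrow> 'a \<Rightarrow> bool" where
  "deep_commuting_adj G H \<pi> x y \<longleftrightarrow> x \<noteq> y \<and>
     (\<forall>x' \<in> carrier H. \<forall>y' \<in> carrier H. \<pi> x' = x \<longrightarrow> \<pi> y' = y \<longrightarrow>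
        x' \<otimes>\<^bsub>H\<^esub> y' = y' \<otimes>\<^bsub>H\<^esub> x')"

definition deep_commuting_eq_enhanced_power :: "('a, 'b) monoid_scheme \<Rightarrow> bool" where
  "deep_commuting_eq_enhanced_power G \<longleftrightarrow>
     (\<forall>(H :: nat monoid) \<pi>. schur_cover G H \<pi> \<longrightarrow>
        (\<forall>x \<in> carrier G. \<forall>y \<in> carrier G.
           deep_commuting_adj G H \<pi> x y \<longleftrightarrow> enhanced_power_adj G x y))"

definition elementary_abelian :: "('a, 'b) monoid_scheme \<Rightarrow> nat \<Rightarrow> bool" where
  "elementary_abelian G p \<longleftrightarrow>
     comm_group G \<and> (\<forall>x \<in> carrier G. x \<noteq> \<one>\<^bsub>G\<^esub> \<longrightarrow> group.ord G x = p)"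

end

theory Submission
  imports Defs
begin


definition stem_gen :: "('a,'b) monoid_scheme \<Rightarrow> ('c,'d) monoid_scheme \<Rightarrow> ('c \<Rightarrow> 'a) \<Rightarrow> bool" where
  "stem_gen G H \<pi> \<longleftrightarrow>
     group H \<and> finite (carrier H) \<and> \<pi> \<in> hom H G \<and> \<pi> ` carrier H = carrier G \<and>
     kernel H G \<pi> \<subseteq> group_center H \<and> kernel H G \<pi> \<subseteq> derived H (carrier H)"

lemma stem_extension_eq: "stem_extension G H \<pi> = stem_gen G H \<pi>"
  by (simp add: stem_extension_def stem_gen_def)

lemma (in comm_group) comm_triv: "x \<in> carrier G \<Longrightarrow> y \<in> carrier G \<Longrightarrow>
   x \<otimes> y \<otimes> inv x \<otimes> inv y = \<one>"
proof -
  assume x: "x \<in> carrier G" and y: "y \<in> carrier G"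
  have "x \<otimes> y \<otimes> inv x \<otimes> inv y = (x \<otimes> y) \<otimes> (inv x \<otimes> inv y)" using x y by (simp add: m_assoc)
  also have "\<dots> = (x \<otimes> y) \<otimes> inv (y \<otimes> x)" using x y by (simp add: inv_mult_group)
  also have "\<dots> = (x \<otimes> y) \<otimes> inv (x \<otimes> y)" using x y m_comm[OF x y] by simp
  also have "\<dots> = \<one>" using x y by simp
  finally show ?thesis .
qed

lemma (in group) inv_cancel_l2 [simp]:
  "x \<in> carrier G \<Longrightarrow> y \<in> carrier G \<Longrightarrow> inv x \<otimes> (x \<otimes> y) = y"
  by (simp add: m_assoc[symmetric])

lemma (in group) inv_cancel_r2 [simp]:
  "x \<in> carrier G \<Longrightarrow> y \<in> carrier G \<Longrightarrow> x \<otimes> (inv x \<otimes> y) = y"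
  by (simp add: m_assoc[symmetric])

locale stemx = G: comm_group G + H: group H for G H and \<pi> +
  assumes hom: "\<pi> \<in> hom H G" and surj: "\<pi> ` carrier H = carrier G"
    and kc: "kernel H G \<pi> \<subseteq> group_center H"
begin

lemma pi_closed: "a \<in> carrier H \<Longrightarrow> \<pi> a \<in> carrier G"
  using hom by (auto simp: hom_def)

lemma pi_mult: "a \<in> carrier H \<Longrightarrow> b \<in> carrier H \<Longrightarrow> \<pi> (a \<otimes>\<^bsub>H\<^esub> b) = \<pi> a \<otimes>\<^bsub>G\<^esub> \<pi> b"
  using hom by (auto simp: hom_def)

lemma gh: "group_hom H G \<pi>"
  using hom by (simp add: group_hom_def group_hom_axioms_def H.group_axioms G.group_axioms)

lemma pi_inv: "a \<in> carrier H \<Longrightarrow> \<pi> (inv\<^bsub>H\<^esub> a) = inv\<^bsub>G\<^esub> \<pi> a"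
  using group_hom.hom_inv[OF gh] by simp

lemma pi_one: "\<pi> \<one>\<^bsub>H\<^esub> = \<one>\<^bsub>G\<^esub>"
  using group_hom.hom_one[OF gh] by simp

lemma pi_pow: "a \<in> carrier H \<Longrightarrow> \<pi> (a [^]\<^bsub>H\<^esub> (k::nat)) = \<pi> a [^]\<^bsub>G\<^esub> k"
  using group_hom.hom_nat_pow[OF gh] by simp

lemma central: "z \<in> carrier H \<Longrightarrow> \<pi> z = \<one>\<^bsub>G\<^esub> \<Longrightarrow> a \<in> carrier H \<Longrightarrow> z \<otimes>\<^bsub>H\<^esub> a = a \<otimes>\<^bsub>H\<^esub> z"
  using kc by (auto simp: kernel_def group_center_def)

lemma comm_ker: "a \<in> carrier H \<Longrightarrow> b \<in> carrier H \<Longrightarrow>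
   \<pi> (a \<otimes>\<^bsub>H\<^esub> b \<otimes>\<^bsub>H\<^esub> inv\<^bsub>H\<^esub> a \<otimes>\<^bsub>H\<^esub> inv\<^bsub>H\<^esub> b) = \<one>\<^bsub>G\<^esub>"
  using G.comm_triv[OF pi_closed pi_closed] by (simp add: pi_mult pi_inv)

lemma lift_comm:
  assumes "a1 \<in> carrier H" "a2 \<in> carrier H" "b1 \<in> carrier H" "b2 \<in> carrier H"
    "\<pi> a1 = \<pi> a2" "\<pi> b1 = \<pi> b2" "a1 \<otimes>\<^bsub>H\<^esub> b1 = b1 \<otimes>\<^bsub>H\<^esub> a1"
  shows "a2 \<otimes>\<^bsub>H\<^esub> b2 = b2 \<otimes>\<^bsub>H\<^esub> a2"
proof -
  define z where "z = inv\<^bsub>H\<^esub> a1 \<otimes>\<^bsub>H\<^esub> a2"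
  define w where "w = inv\<^bsub>H\<^esub> b1 \<otimes>\<^bsub>H\<^esub> b2"
  have zc: "z \<in> carrier H" "w \<in> carrier H" using assms by (auto simp: z_def w_def)
  have z1: "\<pi> z = \<one>\<^bsub>G\<^esub>" "\<pi> w = \<one>\<^bsub>G\<^esub>"
    using assms by (auto simp: z_def w_def pi_mult pi_inv pi_closed)
  have a2: "a2 = a1 \<otimes>\<^bsub>H\<^esub> z" using assms by (simp add: z_def H.m_assoc[symmetric])
  have b2: "b2 = b1 \<otimes>\<^bsub>H\<^esub> w" using assms by (simp add: w_def H.m_assoc[symmetric])
  have zb: "z \<otimes>\<^bsub>H\<^esub> b1 = b1 \<otimes>\<^bsub>H\<^esub> z" using central[OF zc(1) z1(1), of b1] assms by simp
  have wa: "w \<otimes>\<^bsub>H\<^esub> a1 = a1 \<otimes>\<^bsub>H\<^esub> w" using central[OF zc(2) z1(2), of a1] assms by simp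
  have zw: "z \<otimes>\<^bsub>H\<^esub> w = w \<otimes>\<^bsub>H\<^esub> z" using central[OF zc(1) z1(1), of w] zc by simp
  have "a2 \<otimes>\<^bsub>H\<^esub> b2 = a1 \<otimes>\<^bsub>H\<^esub> (z \<otimes>\<^bsub>H\<^esub> b1) \<otimes>\<^bsub>H\<^esub> w"
    using assms(1-4) zc by (simp add: a2 b2 H.m_assoc)
  also have "\<dots> = a1 \<otimes>\<^bsub>H\<^esub> (b1 \<otimes>\<^bsub>H\<^esub> z) \<otimes>\<^bsub>H\<^esub> w"
    by (subst zb) (rule refl)
  also have "\<dots> = (a1 \<otimes>\<^bsub>H\<^esub> b1) \<otimes>\<^bsub>H\<^esub> (z \<otimes>\<^bsub>H\<^esub> w)"
    using assms(1-4) zc by (simp add: H.m_assoc)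
  also have "\<dots> = (b1 \<otimes>\<^bsub>H\<^esub> a1) \<otimes>\<^bsub>H\<^esub> (w \<otimes>\<^bsub>H\<^esub> z)"
    by (subst zw, subst assms(7)) (rule refl)
  also have "\<dots> = b1 \<otimes>\<^bsub>H\<^esub> (a1 \<otimes>\<^bsub>H\<^esub> w) \<otimes>\<^bsub>H\<^esub> z"
    using assms(1-4) zc by (simp add: H.m_assoc)
  also have "\<dots> = b1 \<otimes>\<^bsub>H\<^esub> (w \<otimes>\<^bsub>H\<^esub> a1) \<otimes>\<^bsub>H\<^esub> z"
    by (subst wa) (rule refl)
  also have "\<dots> = b2 \<otimes>\<^bsub>H\<^esub> a2"
    using assms(1-4) zc by (simp add: a2 b2 H.m_assoc)
  finally show ?thesis .
qed

lemma conj_pow: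
  assumes u: "u \<in> carrier H" and v: "v \<in> carrier H"
  shows "u \<otimes>\<^bsub>H\<^esub> v [^]\<^bsub>H\<^esub> (k::nat) \<otimes>\<^bsub>H\<^esub> inv\<^bsub>H\<^esub> u =
    (u \<otimes>\<^bsub>H\<^esub> v \<otimes>\<^bsub>H\<^esub> inv\<^bsub>H\<^esub> u \<otimes>\<^bsub>H\<^esub> inv\<^bsub>H\<^esub> v) [^]\<^bsub>H\<^esub> k \<otimes>\<^bsub>H\<^esub> v [^]\<^bsub>H\<^esub> k"
proof (induction k)
  case 0
  then show ?case using u by simp
next
  case (Suc k)
  define e where "e = u \<otimes>\<^bsub>H\<^esub> v \<otimes>\<^bsub>H\<^esub> inv\<^bsub>H\<^esub> u \<otimes>\<^bsub>H\<^esub> inv\<^bsub>H\<^esub> v"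
  have ec: "e \<in> carrier H" using u v by (simp add: e_def)
  have e1: "\<pi> e = \<one>\<^bsub>G\<^esub>" using comm_ker[OF u v] by (simp add: e_def)
  have uv: "u \<otimes>\<^bsub>H\<^esub> v \<otimes>\<^bsub>H\<^esub> inv\<^bsub>H\<^esub> u = e \<otimes>\<^bsub>H\<^esub> v"
    using u v unfolding e_def by (simp add: H.m_assoc)
  have IH: "u \<otimes>\<^bsub>H\<^esub> v [^]\<^bsub>H\<^esub> k \<otimes>\<^bsub>H\<^esub> inv\<^bsub>H\<^esub> u = e [^]\<^bsub>H\<^esub> k \<otimes>\<^bsub>H\<^esub> v [^]\<^bsub>H\<^esub> k"
    using Suc.IH by (simp add: e_def)
  have ve: "v [^]\<^bsub>H\<^esub> k \<otimes>\<^bsub>H\<^esub> e = e \<otimes>\<^bsub>H\<^esub> v [^]\<^bsub>H\<^esub> k"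
    using central[OF ec e1, of "v [^]\<^bsub>H\<^esub> k"] v by simp
  have "u \<otimes>\<^bsub>H\<^esub> v [^]\<^bsub>H\<^esub> Suc k \<otimes>\<^bsub>H\<^esub> inv\<^bsub>H\<^esub> u =
     (u \<otimes>\<^bsub>H\<^esub> v [^]\<^bsub>H\<^esub> k \<otimes>\<^bsub>H\<^esub> inv\<^bsub>H\<^esub> u) \<otimes>\<^bsub>H\<^esub> (u \<otimes>\<^bsub>H\<^esub> v \<otimes>\<^bsub>H\<^esub> inv\<^bsub>H\<^esub> u)"
    using u v by (simp add: H.m_assoc)
  also have "\<dots> = (e [^]\<^bsub>H\<^esub> k \<otimes>\<^bsub>H\<^esub> v [^]\<^bsub>H\<^esub> k) \<otimes>\<^bsub>H\<^esub> (e \<otimes>\<^bsub>H\<^esub> v)"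
    by (simp only: IH uv)
  also have "\<dots> = e [^]\<^bsub>H\<^esub> k \<otimes>\<^bsub>H\<^esub> (v [^]\<^bsub>H\<^esub> k \<otimes>\<^bsub>H\<^esub> e) \<otimes>\<^bsub>H\<^esub> v"
    using ec v by (simp add: H.m_assoc)
  also have "\<dots> = e [^]\<^bsub>H\<^esub> k \<otimes>\<^bsub>H\<^esub> (e \<otimes>\<^bsub>H\<^esub> v [^]\<^bsub>H\<^esub> k) \<otimes>\<^bsub>H\<^esub> v"
    by (subst ve) (rule refl)
  also have "\<dots> = e [^]\<^bsub>H\<^esub> Suc k \<otimes>\<^bsub>H\<^esub> v [^]\<^bsub>H\<^esub> Suc k"
    using ec v by (simp add: H.m_assoc)
  finally show ?case by (simp add: e_def)
qed

lemma pow_comm: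
  assumes a: "a \<in> carrier H" and b: "b \<in> carrier H" and bp: "\<pi> b [^]\<^bsub>G\<^esub> (p::nat) = \<one>\<^bsub>G\<^esub>"
  shows "a [^]\<^bsub>H\<^esub> p \<otimes>\<^bsub>H\<^esub> b = b \<otimes>\<^bsub>H\<^esub> a [^]\<^bsub>H\<^esub> p"
proof -
  define c where "c = a \<otimes>\<^bsub>H\<^esub> b \<otimes>\<^bsub>H\<^esub> inv\<^bsub>H\<^esub> a \<otimes>\<^bsub>H\<^esub> inv\<^bsub>H\<^esub> b"
  define d where "d = b \<otimes>\<^bsub>H\<^esub> a \<otimes>\<^bsub>H\<^esub> inv\<^bsub>H\<^esub> b \<otimes>\<^bsub>H\<^esub> inv\<^bsub>H\<^esub> a"
  have cc: "c \<in> carrier H" "d \<in> carrier H" using a b by (auto simp: c_def d_def)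
  have dc: "d = inv\<^bsub>H\<^esub> c"
    using a b by (simp add: c_def d_def H.inv_mult_group H.m_assoc)
  have bpk: "\<pi> (b [^]\<^bsub>H\<^esub> p) = \<one>\<^bsub>G\<^esub>" using bp b by (simp add: pi_pow)
  have ab: "a \<otimes>\<^bsub>H\<^esub> b [^]\<^bsub>H\<^esub> p = b [^]\<^bsub>H\<^esub> p \<otimes>\<^bsub>H\<^esub> a"
    using central[OF _ bpk a] a b by simp
  have "a \<otimes>\<^bsub>H\<^esub> b [^]\<^bsub>H\<^esub> p \<otimes>\<^bsub>H\<^esub> inv\<^bsub>H\<^esub> a = b [^]\<^bsub>H\<^esub> p"
    using a b by (simp only: ab) (simp add: H.m_assoc)
  then have "c [^]\<^bsub>H\<^esub> p \<otimes>\<^bsub>H\<^esub> b [^]\<^bsub>H\<^esub> p = \<one>\<^bsub>H\<^esub> \<otimes>\<^bsub>H\<^esub> b [^]\<^bsub>H\<^esub> p"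
    using conj_pow[OF a b, of p] b unfolding c_def by simp
  then have cp: "c [^]\<^bsub>H\<^esub> p = \<one>\<^bsub>H\<^esub>"
    using cc b H.r_cancel[of "b [^]\<^bsub>H\<^esub> p" "c [^]\<^bsub>H\<^esub> p" "\<one>\<^bsub>H\<^esub>"] by simp
  have dp: "d [^]\<^bsub>H\<^esub> p = \<one>\<^bsub>H\<^esub>"
    using cc cp by (simp add: dc H.nat_pow_inv)
  have "b \<otimes>\<^bsub>H\<^esub> a [^]\<^bsub>H\<^esub> p \<otimes>\<^bsub>H\<^esub> inv\<^bsub>H\<^esub> b = a [^]\<^bsub>H\<^esub> p"
    using conj_pow[OF b a, of p] dp a unfolding d_def by simp
  then show ?thesis
    using a b H.inv_solve_right[of "a [^]\<^bsub>H\<^esub> p" "b \<otimes>\<^bsub>H\<^esub> a [^]\<^bsub>H\<^esub> p" b] by simp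
qed

end
definition transp :: "('c,'d) monoid_scheme \<Rightarrow> ('c \<Rightarrow> nat) \<Rightarrow> nat monoid" where
  "transp E e = \<lparr>carrier = e ` carrier E,
     monoid.mult = (\<lambda>a b. e (inv_into (carrier E) e a \<otimes>\<^bsub>E\<^esub> inv_into (carrier E) e b)),
     one = e \<one>\<^bsub>E\<^esub>\<rparr>"

context
  fixes E :: "('c,'d) monoid_scheme" and e :: "'c \<Rightarrow> nat"
  assumes E: "group E" and inj: "inj_on e (carrier E)"
begin

interpretation E: group E by (rule E)

private abbreviation "dd \<equiv> inv_into (carrier E) e"

lemma transp_carrier [simp]: "carrier (transp E e) = e ` carrier E"
  by (simp add: transp_def)

lemma transp_mult [simp]: "x \<in> carrier E \<Longrightarrow> y \<in> carrier E \<Longrightarrow> e x \<otimes>\<^bsub>transp E e\<^esub> e y = e (x \<otimes>\<^bsub>E\<^esub> y)"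
  using inj by (simp add: transp_def inv_into_f_f)

lemma transp_one [simp]: "\<one>\<^bsub>transp E e\<^esub> = e \<one>\<^bsub>E\<^esub>"
  by (simp add: transp_def)

lemma transp_group: "group (transp E e)"
proof (rule groupI)
  fix x y assume "x \<in> carrier (transp E e)" "y \<in> carrier (transp E e)"
  then show "x \<otimes>\<^bsub>transp E e\<^esub> y \<in> carrier (transp E e)" by auto
next
  show "\<one>\<^bsub>transp E e\<^esub> \<in> carrier (transp E e)" by simp
next
  fix x y z assume "x \<in> carrier (transp E e)" "y \<in> carrier (transp E e)" "z \<in> carrier (transp E e)"
  then show "x \<otimes>\<^bsub>transp E e\<^esub> y \<otimes>\<^bsub>transp E e\<^esub> z = x \<otimes>\<^bsub>transp E e\<^esub> (y \<otimes>\<^bsub>transp E e\<^esub> z)"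
    by (auto simp: E.m_assoc)
next
  fix x assume "x \<in> carrier (transp E e)"
  then show "\<one>\<^bsub>transp E e\<^esub> \<otimes>\<^bsub>transp E e\<^esub> x = x" by auto
next
  fix x assume "x \<in> carrier (transp E e)"
  then obtain a where a: "a \<in> carrier E" "x = e a" by auto
  show "\<exists>y\<in>carrier (transp E e). y \<otimes>\<^bsub>transp E e\<^esub> x = \<one>\<^bsub>transp E e\<^esub>"
    by (rule bexI[of _ "e (inv\<^bsub>E\<^esub> a)"]) (use a in auto)
qed

lemma transp_hom: "e \<in> hom E (transp E e)"
  by (auto simp: hom_def)

lemma transp_inv_hom: "dd \<in> hom (transp E e) E"
  using inj by (auto simp: hom_def inv_into_f_f)

lemma transp_order: "order (transp E e) = order E"
  using inj by (simp add: order_def card_image)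

lemma transp_group_hom: "group_hom E (transp E e) e"
  using transp_hom transp_group E by (simp add: group_hom_def group_hom_axioms_def)

lemma transp_stem:
  assumes "stem_gen G E \<pi>"
  shows "stem_extension G (transp E e) (\<pi> \<circ> dd)"
proof -
  have st: "finite (carrier E)" "\<pi> \<in> hom E G" "\<pi> ` carrier E = carrier G"
     "kernel E G \<pi> \<subseteq> group_center E" "kernel E G \<pi> \<subseteq> derived E (carrier E)"
    using assms by (auto simp: stem_gen_def)
  have ker: "kernel (transp E e) G (\<pi> \<circ> dd) = e ` kernel E G \<pi>"
    using inj by (auto simp: kernel_def inv_into_f_f image_iff)
  have cen: "e ` group_center E \<subseteq> group_center (transp E e)"
    by (auto simp: group_center_def)
  have der: "derived (transp E e) (carrier (transp E e)) = e ` derived E (carrier E)"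
    using group_hom.derived_img[OF transp_group_hom, of "carrier E"] by simp
  have hom: "\<pi> \<circ> dd \<in> hom (transp E e) G"
    using st(2) inj by (auto simp: hom_def inv_into_f_f)
  have "(\<pi> \<circ> dd) ` carrier (transp E e) = \<pi> ` (dd ` (e ` carrier E))"
    by (simp add: image_comp)
  also have "dd ` (e ` carrier E) = carrier E"
    using inj by (rule inv_into_image_cancel) simp
  finally have sur: "(\<pi> \<circ> dd) ` carrier (transp E e) = carrier G"
    using st(3) by simp
  have k1: "kernel (transp E e) G (\<pi> \<circ> dd) \<subseteq> group_center (transp E e)"
    unfolding ker using st(4) cen by blast
  have k2: "kernel (transp E e) G (\<pi> \<circ> dd) \<subseteq> derived (transp E e) (carrier (transp E e))"
    unfolding ker der using st(5) by blast
  have fin: "finite (carrier (transp E e))" using st(1) by simp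
  show ?thesis
    unfolding stem_extension_def
    using transp_group fin hom sur k1 k2 by blast
qed

end



context stemx
begin

lemma comm_pow_one:
  assumes a: "a \<in> carrier H" and b: "b \<in> carrier H" and bp: "\<pi> b [^]\<^bsub>G\<^esub> (p::nat) = \<one>\<^bsub>G\<^esub>"
  shows "(a \<otimes>\<^bsub>H\<^esub> b \<otimes>\<^bsub>H\<^esub> inv\<^bsub>H\<^esub> a \<otimes>\<^bsub>H\<^esub> inv\<^bsub>H\<^esub> b) [^]\<^bsub>H\<^esub> p = \<one>\<^bsub>H\<^esub>"
proof -
  define c where "c = a \<otimes>\<^bsub>H\<^esub> b \<otimes>\<^bsub>H\<^esub> inv\<^bsub>H\<^esub> a \<otimes>\<^bsub>H\<^esub> inv\<^bsub>H\<^esub> b"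
  have cc: "c \<in> carrier H" using a b by (auto simp: c_def)
  have bpk: "\<pi> (b [^]\<^bsub>H\<^esub> p) = \<one>\<^bsub>G\<^esub>" using bp b by (simp add: pi_pow)
  have ab: "a \<otimes>\<^bsub>H\<^esub> b [^]\<^bsub>H\<^esub> p = b [^]\<^bsub>H\<^esub> p \<otimes>\<^bsub>H\<^esub> a"
    using central[OF _ bpk a] a b by simp
  have "a \<otimes>\<^bsub>H\<^esub> b [^]\<^bsub>H\<^esub> p \<otimes>\<^bsub>H\<^esub> inv\<^bsub>H\<^esub> a = b [^]\<^bsub>H\<^esub> p"
    using a b by (simp only: ab) (simp add: H.m_assoc)
  then have "c [^]\<^bsub>H\<^esub> p \<otimes>\<^bsub>H\<^esub> b [^]\<^bsub>H\<^esub> p = \<one>\<^bsub>H\<^esub> \<otimes>\<^bsub>H\<^esub> b [^]\<^bsub>H\<^esub> p"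
    using conj_pow[OF a b, of p] b unfolding c_def by simp
  then have cp: "c [^]\<^bsub>H\<^esub> p = \<one>\<^bsub>H\<^esub>"
    using cc b H.r_cancel[of "b [^]\<^bsub>H\<^esub> p" "c [^]\<^bsub>H\<^esub> p" "\<one>\<^bsub>H\<^esub>"] by simp
  then show ?thesis by (simp add: c_def)
qed

lemma comm_alt:
  assumes a: "a \<in> carrier H" and b: "b \<in> carrier H"
  shows "a \<otimes>\<^bsub>H\<^esub> b \<otimes>\<^bsub>H\<^esub> inv\<^bsub>H\<^esub> a \<otimes>\<^bsub>H\<^esub> inv\<^bsub>H\<^esub> b = (a \<otimes>\<^bsub>H\<^esub> b) \<otimes>\<^bsub>H\<^esub> inv\<^bsub>H\<^esub> (b \<otimes>\<^bsub>H\<^esub> a)"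
  using a b by (simp add: H.inv_mult_group H.m_assoc)

lemma comm_lift:
  assumes "a1 \<in> carrier H" "a2 \<in> carrier H" "b1 \<in> carrier H" "b2 \<in> carrier H"
    "\<pi> a1 = \<pi> a2" "\<pi> b1 = \<pi> b2"
  shows "a2 \<otimes>\<^bsub>H\<^esub> b2 \<otimes>\<^bsub>H\<^esub> inv\<^bsub>H\<^esub> a2 \<otimes>\<^bsub>H\<^esub> inv\<^bsub>H\<^esub> b2
       = a1 \<otimes>\<^bsub>H\<^esub> b1 \<otimes>\<^bsub>H\<^esub> inv\<^bsub>H\<^esub> a1 \<otimes>\<^bsub>H\<^esub> inv\<^bsub>H\<^esub> b1"
proof -
  define z where "z = inv\<^bsub>H\<^esub> a1 \<otimes>\<^bsub>H\<^esub> a2"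
  define w where "w = inv\<^bsub>H\<^esub> b1 \<otimes>\<^bsub>H\<^esub> b2"
  have zc: "z \<in> carrier H" "w \<in> carrier H" using assms by (auto simp: z_def w_def)
  have z1: "\<pi> z = \<one>\<^bsub>G\<^esub>" "\<pi> w = \<one>\<^bsub>G\<^esub>"
    using assms by (auto simp: z_def w_def pi_mult pi_inv pi_closed)
  have a2: "a2 = a1 \<otimes>\<^bsub>H\<^esub> z" using assms by (simp add: z_def H.m_assoc[symmetric])
  have b2: "b2 = b1 \<otimes>\<^bsub>H\<^esub> w" using assms by (simp add: w_def H.m_assoc[symmetric])
  have zb: "z \<otimes>\<^bsub>H\<^esub> b1 = b1 \<otimes>\<^bsub>H\<^esub> z" using central[OF zc(1) z1(1), of b1] assms by simp
  have wa: "w \<otimes>\<^bsub>H\<^esub> a1 = a1 \<otimes>\<^bsub>H\<^esub> w" using central[OF zc(2) z1(2), of a1] assms by simp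
  have zw: "z \<otimes>\<^bsub>H\<^esub> w = w \<otimes>\<^bsub>H\<^esub> z" using central[OF zc(1) z1(1), of w] zc by simp
  have e1: "a2 \<otimes>\<^bsub>H\<^esub> b2 = (a1 \<otimes>\<^bsub>H\<^esub> b1) \<otimes>\<^bsub>H\<^esub> (z \<otimes>\<^bsub>H\<^esub> w)"
  proof -
    have "a2 \<otimes>\<^bsub>H\<^esub> b2 = a1 \<otimes>\<^bsub>H\<^esub> (z \<otimes>\<^bsub>H\<^esub> b1) \<otimes>\<^bsub>H\<^esub> w"
      using assms(1-4) zc by (simp add: a2 b2 H.m_assoc)
    also have "\<dots> = a1 \<otimes>\<^bsub>H\<^esub> (b1 \<otimes>\<^bsub>H\<^esub> z) \<otimes>\<^bsub>H\<^esub> w"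
      by (subst zb) (rule refl)
    also have "\<dots> = (a1 \<otimes>\<^bsub>H\<^esub> b1) \<otimes>\<^bsub>H\<^esub> (z \<otimes>\<^bsub>H\<^esub> w)"
      using assms(1-4) zc by (simp add: H.m_assoc)
    finally show ?thesis .
  qed
  have e2: "b2 \<otimes>\<^bsub>H\<^esub> a2 = (b1 \<otimes>\<^bsub>H\<^esub> a1) \<otimes>\<^bsub>H\<^esub> (z \<otimes>\<^bsub>H\<^esub> w)"
  proof -
    have "b2 \<otimes>\<^bsub>H\<^esub> a2 = b1 \<otimes>\<^bsub>H\<^esub> (w \<otimes>\<^bsub>H\<^esub> a1) \<otimes>\<^bsub>H\<^esub> z"
      using assms(1-4) zc by (simp add: a2 b2 H.m_assoc)
    also have "\<dots> = b1 \<otimes>\<^bsub>H\<^esub> (a1 \<otimes>\<^bsub>H\<^esub> w) \<otimes>\<^bsub>H\<^esub> z"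
      by (subst wa) (rule refl)
    also have "\<dots> = (b1 \<otimes>\<^bsub>H\<^esub> a1) \<otimes>\<^bsub>H\<^esub> (w \<otimes>\<^bsub>H\<^esub> z)"
      using assms(1-4) zc by (simp add: H.m_assoc)
    also have "\<dots> = (b1 \<otimes>\<^bsub>H\<^esub> a1) \<otimes>\<^bsub>H\<^esub> (z \<otimes>\<^bsub>H\<^esub> w)"
      by (subst zw) (rule refl)
    finally show ?thesis .
  qed
  have "a2 \<otimes>\<^bsub>H\<^esub> b2 \<otimes>\<^bsub>H\<^esub> inv\<^bsub>H\<^esub> a2 \<otimes>\<^bsub>H\<^esub> inv\<^bsub>H\<^esub> b2 = (a2 \<otimes>\<^bsub>H\<^esub> b2) \<otimes>\<^bsub>H\<^esub> inv\<^bsub>H\<^esub> (b2 \<otimes>\<^bsub>H\<^esub> a2)"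
    using comm_alt[OF assms(2) assms(4)] .
  also have "\<dots> = (a1 \<otimes>\<^bsub>H\<^esub> b1) \<otimes>\<^bsub>H\<^esub> (z \<otimes>\<^bsub>H\<^esub> w) \<otimes>\<^bsub>H\<^esub> (inv\<^bsub>H\<^esub> (z \<otimes>\<^bsub>H\<^esub> w) \<otimes>\<^bsub>H\<^esub> inv\<^bsub>H\<^esub> (b1 \<otimes>\<^bsub>H\<^esub> a1))"
    unfolding e1 e2 using assms zc by (simp add: H.inv_mult_group)
  also have "\<dots> = (a1 \<otimes>\<^bsub>H\<^esub> b1) \<otimes>\<^bsub>H\<^esub> inv\<^bsub>H\<^esub> (b1 \<otimes>\<^bsub>H\<^esub> a1)"
    using assms zc by (simp add: H.m_assoc)
  also have "\<dots> = a1 \<otimes>\<^bsub>H\<^esub> b1 \<otimes>\<^bsub>H\<^esub> inv\<^bsub>H\<^esub> a1 \<otimes>\<^bsub>H\<^esub> inv\<^bsub>H\<^esub> b1"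
    using assms by (simp add: comm_alt)
  finally show ?thesis .
qed

lemma pow_mod_N:
  assumes c: "c \<in> carrier H" and cN: "c [^]\<^bsub>H\<^esub> (N::nat) = \<one>\<^bsub>H\<^esub>"
  shows "c [^]\<^bsub>H\<^esub> (m::nat) = c [^]\<^bsub>H\<^esub> (m mod N)"
proof -
  have "c [^]\<^bsub>H\<^esub> m = c [^]\<^bsub>H\<^esub> (N * (m div N) + m mod N)" by simp
  also have "\<dots> = c [^]\<^bsub>H\<^esub> (N * (m div N)) \<otimes>\<^bsub>H\<^esub> c [^]\<^bsub>H\<^esub> (m mod N)"
    using c by (simp only: H.nat_pow_mult)
  also have "\<dots> = (c [^]\<^bsub>H\<^esub> N) [^]\<^bsub>H\<^esub> (m div N) \<otimes>\<^bsub>H\<^esub> c [^]\<^bsub>H\<^esub> (m mod N)"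
    using c by (simp only: H.nat_pow_pow)
  also have "\<dots> = c [^]\<^bsub>H\<^esub> (m mod N)" using c cN by simp
  finally show ?thesis .
qed

lemma gen_card_bound:
  assumes "finite D" "N > 0"
  shows "D \<subseteq> carrier H \<Longrightarrow> (\<forall>c\<in>D. \<pi> c = \<one>\<^bsub>G\<^esub> \<and> c [^]\<^bsub>H\<^esub> N = \<one>\<^bsub>H\<^esub>) \<Longrightarrow>
    finite (carrier H) \<Longrightarrow> card (generate H D) \<le> N ^ card D"
  using assms(1)
proof (induction D rule: finite_induct)
  case empty
  then show ?case by (simp add: H.generate_empty)
next
  case (insert c D)
  have c: "c \<in> carrier H" "\<pi> c = \<one>\<^bsub>G\<^esub>" "c [^]\<^bsub>H\<^esub> N = \<one>\<^bsub>H\<^esub>" using insert.prems by auto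
  have Dc: "D \<subseteq> carrier H" using insert.prems by auto
  define S where "S = (\<lambda>(u,k). u \<otimes>\<^bsub>H\<^esub> c [^]\<^bsub>H\<^esub> k) ` (generate H D \<times> {..<N})"
  have gD: "generate H D \<subseteq> carrier H" using H.generate_in_carrier[OF Dc] by blast
  have cen: "c [^]\<^bsub>H\<^esub> (k::nat) \<otimes>\<^bsub>H\<^esub> x = x \<otimes>\<^bsub>H\<^esub> c [^]\<^bsub>H\<^esub> k" if "x \<in> carrier H" for x k
    using central[of "c [^]\<^bsub>H\<^esub> k" x] c that by (simp add: pi_pow)
  have Ssub: "subgroup S H"
  proof (rule H.subgroupI)
    show "S \<subseteq> carrier H" using gD c by (auto simp: S_def)
    show "S \<noteq> {}" using assms(2) generate.one[of H D] by (auto simp: S_def)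
  next
    fix a assume "a \<in> S"
    then obtain u k where u: "u \<in> generate H D" "k < N" "a = u \<otimes>\<^bsub>H\<^esub> c [^]\<^bsub>H\<^esub> k"
      by (auto simp: S_def)
    have uc: "u \<in> carrier H" using u gD by auto
    have "c [^]\<^bsub>H\<^esub> ((N - k) mod N) \<otimes>\<^bsub>H\<^esub> c [^]\<^bsub>H\<^esub> k = \<one>\<^bsub>H\<^esub>"
      using c u(2) by (simp add: H.nat_pow_mult pow_mod_N[OF c(1) c(3), of "N - k", symmetric])
    then have ick: "inv\<^bsub>H\<^esub> (c [^]\<^bsub>H\<^esub> k) = c [^]\<^bsub>H\<^esub> ((N - k) mod N)"
      using c by (intro H.inv_equality) auto
    have "inv\<^bsub>H\<^esub> a = inv\<^bsub>H\<^esub> u \<otimes>\<^bsub>H\<^esub> c [^]\<^bsub>H\<^esub> ((N - k) mod N)"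
      using u uc c by (simp add: H.inv_mult_group ick cen)
    moreover have "inv\<^bsub>H\<^esub> u \<in> generate H D" using u H.generate_m_inv_closed Dc by blast
    moreover have "(N - k) mod N < N" using assms(2) by simp
    ultimately show "inv\<^bsub>H\<^esub> a \<in> S" by (auto simp: S_def)
  next
    fix a b assume "a \<in> S" "b \<in> S"
    then obtain u k v l where u: "u \<in> generate H D" "k < N" "a = u \<otimes>\<^bsub>H\<^esub> c [^]\<^bsub>H\<^esub> k"
      and v: "v \<in> generate H D" "l < N" "b = v \<otimes>\<^bsub>H\<^esub> c [^]\<^bsub>H\<^esub> l"
      by (auto simp: S_def)
    have uc: "u \<in> carrier H" "v \<in> carrier H" using u v gD by auto
    have "a \<otimes>\<^bsub>H\<^esub> b = u \<otimes>\<^bsub>H\<^esub> (c [^]\<^bsub>H\<^esub> k \<otimes>\<^bsub>H\<^esub> v) \<otimes>\<^bsub>H\<^esub> c [^]\<^bsub>H\<^esub> l"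
      using u v uc c by (simp add: H.m_assoc)
    also have "\<dots> = u \<otimes>\<^bsub>H\<^esub> (v \<otimes>\<^bsub>H\<^esub> c [^]\<^bsub>H\<^esub> k) \<otimes>\<^bsub>H\<^esub> c [^]\<^bsub>H\<^esub> l"
      using cen[OF uc(2), of k] by simp
    also have "\<dots> = (u \<otimes>\<^bsub>H\<^esub> v) \<otimes>\<^bsub>H\<^esub> c [^]\<^bsub>H\<^esub> ((k + l) mod N)"
      using uc c by (simp add: H.m_assoc H.nat_pow_mult pow_mod_N[OF c(1) c(3), of "k + l", symmetric])
    finally have "a \<otimes>\<^bsub>H\<^esub> b = (u \<otimes>\<^bsub>H\<^esub> v) \<otimes>\<^bsub>H\<^esub> c [^]\<^bsub>H\<^esub> ((k + l) mod N)" .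
    moreover have "u \<otimes>\<^bsub>H\<^esub> v \<in> generate H D" using u v by (simp add: generate.eng)
    moreover have "(k + l) mod N < N" using assms(2) by simp
    ultimately show "a \<otimes>\<^bsub>H\<^esub> b \<in> S" by (auto simp: S_def)
  qed
  have incl: "insert c D \<subseteq> S"
  proof
    fix x assume "x \<in> insert c D"
    then show "x \<in> S"
    proof
      assume "x = c"
      then have "x = \<one>\<^bsub>H\<^esub> \<otimes>\<^bsub>H\<^esub> c [^]\<^bsub>H\<^esub> (1 mod N)"
        using c pow_mod_N[OF c(1) c(3), of 1] by simp
      then show ?thesis unfolding S_def using generate.one[of H D] assms(2)
        by (intro image_eqI[where x="(\<one>\<^bsub>H\<^esub>, 1 mod N)"]) auto
    next
      assume "x \<in> D"
      then have "x = x \<otimes>\<^bsub>H\<^esub> c [^]\<^bsub>H\<^esub> (0::nat)" "x \<in> generate H D"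
        using Dc by (auto intro: generate.incl)
      then show ?thesis unfolding S_def using assms(2)
        by (intro image_eqI[where x="(x, 0)"]) auto
    qed
  qed
  have "generate H (insert c D) \<subseteq> S"
    using H.generate_subgroup_incl[OF incl Ssub] .
  moreover have "finite S"
    using finite_subset[OF gD insert.prems(3)] by (simp add: S_def)
  ultimately have "card (generate H (insert c D)) \<le> card S"
    by (simp add: card_mono)
  also have "\<dots> \<le> card (generate H D \<times> {..<N})"
    unfolding S_def by (rule card_image_le) (use insert.prems gD in \<open>auto intro: finite_subset\<close>)
  also have "\<dots> = card (generate H D) * N" by (simp add: card_cartesian_product)
  also have "\<dots> \<le> N ^ card D * N"
    using insert.IH Dc insert.prems by auto
  also have "\<dots> = N ^ card (insert c D)" using insert.hyps by simp
  finally show ?case .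
qed

lemma order_bound:
  assumes finG: "finite (carrier G)" and kd: "kernel H G \<pi> \<subseteq> derived H (carrier H)"
    and finH: "finite (carrier H)"
  shows "order H \<le> order G * order G ^ (order G * order G)"
proof -
  define N where "N = order G"
  have N0: "N > 0" using finG by (simp add: N_def G.order_gt_0_iff_finite)
  define t where "t = inv_into (carrier H) \<pi>"
  have t: "t g \<in> carrier H" "\<pi> (t g) = g" if "g \<in> carrier G" for g
    using that surj by (auto simp: t_def inv_into_into f_inv_into_f)
  define cm where "cm = (\<lambda>a b. a \<otimes>\<^bsub>H\<^esub> b \<otimes>\<^bsub>H\<^esub> inv\<^bsub>H\<^esub> a \<otimes>\<^bsub>H\<^esub> inv\<^bsub>H\<^esub> b)"
  define D where "D = (\<lambda>(g1,g2). cm (t g1) (t g2)) ` (carrier G \<times> carrier G)"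
  have Dsub: "D \<subseteq> carrier H" using t by (auto simp: D_def cm_def)
  have Dprop: "\<forall>c\<in>D. \<pi> c = \<one>\<^bsub>G\<^esub> \<and> c [^]\<^bsub>H\<^esub> N = \<one>\<^bsub>H\<^esub>"
  proof
    fix c assume "c \<in> D"
    then obtain g1 g2 where g: "g1 \<in> carrier G" "g2 \<in> carrier G" "c = cm (t g1) (t g2)"
      by (auto simp: D_def)
    have "\<pi> (t g2) [^]\<^bsub>G\<^esub> N = \<one>\<^bsub>G\<^esub>" using g t by (simp add: N_def G.pow_order_eq_1)
    then show "\<pi> c = \<one>\<^bsub>G\<^esub> \<and> c [^]\<^bsub>H\<^esub> N = \<one>\<^bsub>H\<^esub>"
      using g t comm_ker comm_pow_one by (simp add: cm_def)
  qed
  have finD: "finite D" using finG by (simp add: D_def)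
  have cardD: "card D \<le> N * N"
  proof -
    have "card D \<le> card (carrier G \<times> carrier G)" unfolding D_def
      by (rule card_image_le) (simp add: finG)
    then show ?thesis by (simp add: card_cartesian_product N_def order_def)
  qed
  have ds: "derived_set H (carrier H) \<subseteq> D"
  proof
    fix x assume "x \<in> derived_set H (carrier H)"
    then obtain a b where ab: "a \<in> carrier H" "b \<in> carrier H" "x = cm a b"
      by (auto simp: cm_def)
    have "cm a b = cm (t (\<pi> a)) (t (\<pi> b))"
      unfolding cm_def by (rule comm_lift[symmetric]) (use ab t pi_closed in auto)
    then show "x \<in> D" using ab pi_closed by (auto simp: D_def)
  qed
  have kg: "kernel H G \<pi> \<subseteq> generate H D"
    using kd H.mono_generate[OF ds] by (auto simp: derived_def)
  have ck: "card (kernel H G \<pi>) \<le> N ^ (N * N)"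
  proof -
    have "card (kernel H G \<pi>) \<le> card (generate H D)"
      by (rule card_mono[OF _ kg]) (use H.generate_in_carrier[OF Dsub] finH in \<open>blast intro: finite_subset\<close>)
    also have "\<dots> \<le> N ^ card D" by (rule gen_card_bound[OF finD N0 Dsub Dprop finH])
    also have "\<dots> \<le> N ^ (N * N)" using cardD N0 by (simp add: power_increasing)
    finally show ?thesis .
  qed
  have cov: "carrier H \<subseteq> (\<lambda>(g,z). t g \<otimes>\<^bsub>H\<^esub> z) ` (carrier G \<times> kernel H G \<pi>)"
  proof
    fix a assume a: "a \<in> carrier H"
    have pa: "\<pi> a \<in> carrier G" using a pi_closed by simp
    have "inv\<^bsub>H\<^esub> (t (\<pi> a)) \<otimes>\<^bsub>H\<^esub> a \<in> kernel H G \<pi>"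
      using a t[OF pa] pa by (simp add: kernel_def pi_mult pi_inv)
    moreover have "a = t (\<pi> a) \<otimes>\<^bsub>H\<^esub> (inv\<^bsub>H\<^esub> (t (\<pi> a)) \<otimes>\<^bsub>H\<^esub> a)"
      using a t[OF pa] by simp
    ultimately show "a \<in> (\<lambda>(g,z). t g \<otimes>\<^bsub>H\<^esub> z) ` (carrier G \<times> kernel H G \<pi>)"
      using pa by (intro image_eqI[where x="(\<pi> a, inv\<^bsub>H\<^esub> (t (\<pi> a)) \<otimes>\<^bsub>H\<^esub> a)"]) auto
  qed
  have finK: "finite (kernel H G \<pi>)" using finH by (simp add: kernel_def)
  have "order H \<le> card ((\<lambda>(g,z). t g \<otimes>\<^bsub>H\<^esub> z) ` (carrier G \<times> kernel H G \<pi>))"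
    unfolding order_def by (rule card_mono[OF _ cov]) (simp add: finG finK)
  also have "\<dots> \<le> card (carrier G \<times> kernel H G \<pi>)"
    by (rule card_image_le) (simp add: finG finK)
  also have "\<dots> = N * card (kernel H G \<pi>)" by (simp add: card_cartesian_product N_def order_def)
  also have "\<dots> \<le> N * N ^ (N * N)" using ck by simp
  finally show ?thesis by (simp add: N_def)
qed

end

lemma stem_order_bound:
  assumes "comm_group G" "finite (carrier G)" "stem_extension G K \<psi>"
  shows "order K \<le> order G * order G ^ (order G * order G)"
proof -
  have st: "group K" "finite (carrier K)" "\<psi> \<in> hom K G" "\<psi> ` carrier K = carrier G"
     "kernel K G \<psi> \<subseteq> group_center K" "kernel K G \<psi> \<subseteq> derived K (carrier K)"
    using assms(3) by (auto simp: stem_extension_def)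
  interpret stemx G K \<psi>
    using assms(1) st by (simp add: stemx_def stemx_axioms_def comm_group_def)
  show ?thesis using order_bound[OF assms(2) st(6) st(2)] .
qed

lemma self_stem:
  assumes "comm_group G" "finite (carrier G)"
  shows "stem_gen G G id"
proof -
  interpret comm_group G by (rule assms(1))
  have k: "kernel G G id = {\<one>\<^bsub>G\<^esub>}" by (auto simp: kernel_def)
  have "\<one>\<^bsub>G\<^esub> \<in> derived G (carrier G)"
    using derived_is_subgroup[of "carrier G"] subgroup.one_closed by auto
  then show ?thesis
    using assms(2) k by (auto simp: stem_gen_def group_center_def hom_def is_group)
qed

lemma schur_exists:
  assumes "comm_group G" "finite (carrier G)"
  shows "\<exists>(H :: nat monoid) \<pi>. schur_cover G H \<pi>"
proof -
  obtain e :: "'a \<Rightarrow> nat" and n where e: "e ` carrier G = {i. i < n}" "inj_on e (carrier G)"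
    using finite_imp_inj_to_nat_seg[OF assms(2)] by blast
  have g: "group G" using assms(1) by (simp add: comm_group_def)
  have s0: "stem_extension G (transp G e) (id \<circ> inv_into (carrier G) e)"
    using transp_stem[OF g e(2) self_stem[OF assms]] .
  define Os where "Os = {order K | (K :: nat monoid) \<psi>. stem_extension G K \<psi>}"
  have Ob: "Os \<subseteq> {..order G * order G ^ (order G * order G)}"
    using stem_order_bound[OF assms] by (auto simp: Os_def)
  have finO: "finite Os" using finite_subset[OF Ob] by simp
  have neO: "Os \<noteq> {}" using s0 by (auto simp: Os_def)
  have "Max Os \<in> Os" using finO neO by (rule Max_in)
  then obtain K :: "nat monoid" and \<psi> where K: "stem_extension G K \<psi>" "order K = Max Os"
    by (auto simp: Os_def)
  have "schur_cover G K \<psi>"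
    unfolding schur_cover_def
  proof (intro conjI allI impI)
    show "stem_extension G K \<psi>" by (rule K(1))
    fix K' :: "nat monoid" and \<psi>' assume "stem_extension G K' \<psi>'"
    then have "order K' \<in> Os" by (auto simp: Os_def)
    then show "order K' \<le> order K" using K(2) finO by simp
  qed
  then show ?thesis by blast
qed



lemma (in group) pow_mod_p:
  assumes g: "g \<in> carrier G" and gp: "g [^] (p::nat) = \<one>"
  shows "g [^] (m::nat) = g [^] (m mod p)"
proof -
  have "g [^] m = g [^] (p * (m div p) + m mod p)" by simp
  also have "\<dots> = g [^] (p * (m div p)) \<otimes> g [^] (m mod p)"
    using g by (simp only: nat_pow_mult)
  also have "\<dots> = (g [^] p) [^] (m div p) \<otimes> g [^] (m mod p)"
    using g by (simp only: nat_pow_pow)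
  also have "\<dots> = g [^] (m mod p)" using g gp by simp
  finally show ?thesis .
qed

lemma (in group) int_pow_mod_p:
  assumes g: "g \<in> carrier G" and gp: "g [^] (p::nat) = \<one>" and p: "p > 0"
  shows "g [^] (a::int) = g [^] (nat (a mod int p))"
proof -
  have "ord g dvd p" using gp g pow_eq_id by blast
  then have "int (ord g) dvd (a mod int p - a)"
    by (meson dvd_trans int_dvd_int_iff mod_eq_dvd_iff mod_mod_trivial)
  then have "g [^] a = g [^] (a mod int p)" using int_pow_eq[OF g] by blast
  also have "\<dots> = g [^] (int (nat (a mod int p)))" using p by simp
  also have "\<dots> = g [^] (nat (a mod int p))" by (rule int_pow_int)
  finally show ?thesis .
qed

lemma (in group) prime_pow_inverse:
  assumes x: "x \<in> carrier G" and g: "g \<in> carrier G" and gp: "g [^] (p::nat) = \<one>"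
    and p: "Factorial_Ring.prime p" and xa: "x = g [^] (a::nat)" and x1: "x \<noteq> \<one>"
  shows "\<exists>a'. g = x [^] (a'::nat)"
proof -
  have p0: "p > 0" using p prime_gt_0_nat by blast
  define a0 where "a0 = a mod p"
  have xa0: "x = g [^] a0" using xa pow_mod_p[OF g gp] by (simp add: a0_def)
  have a00: "a0 \<noteq> 0"
  proof
    assume "a0 = 0"
    then have "x = \<one>" using xa0 by simp
    with x1 show False ..
  qed
  have "a0 < p" using p0 by (simp add: a0_def)
  then have "\<not> p dvd a0" using a00 by (auto dest: dvd_imp_le)
  then have "coprime p a0" using p by (rule prime_imp_coprime[rotated])
  then have "coprime a0 p" by (simp add: coprime_commute)
  then have "gcd a0 p = 1" by simp
  then obtain u v where uv: "a0 * u = p * v + 1" using bezout_nat[OF a00, of p] by auto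
  have "x [^] u = g [^] (a0 * u)" using xa0 g by (simp add: nat_pow_pow)
  also have "\<dots> = g [^] ((a0 * u) mod p)" using pow_mod_p[OF g gp] by simp
  also have "(a0 * u) mod p = 1 mod p"
  proof -
    have "(a0 * u) mod p = (1 + v * p) mod p" using uv by (simp add: algebra_simps)
    also have "\<dots> = 1 mod p" by (rule mod_mult_self1)
    finally show ?thesis .
  qed
  also have "g [^] (1 mod p) = g" using pow_mod_p[OF g gp, of 1] g by simp
  finally show ?thesis by metis
qed

lemma (in group) noncyclic_pair:
  assumes x: "x \<in> carrier G" and y: "y \<in> carrier G" and p: "Factorial_Ring.prime p"
    and x1: "x \<noteq> \<one>" and exp: "\<forall>z\<in>generate G {x, y}. z [^] (p::nat) = \<one>"
    and cyc: "cyclic_group (subgroup_generated G {x, y})"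
  shows "\<exists>k::nat. y = x [^] k"
proof -
  define K where "K = subgroup_generated G {x, y}"
  have cK: "carrier K = generate G {x, y}"
    using x y by (simp add: K_def carrier_subgroup_generated Int_absorb1)
  have gK: "group K" by (simp add: K_def)
  obtain g where g: "g \<in> carrier K" "carrier K = range (\<lambda>n::int. g [^]\<^bsub>K\<^esub> n)"
    using cyc group.cyclic_group[OF gK] by (auto simp: K_def)
  have pw: "g [^]\<^bsub>K\<^esub> (n::int) = g [^] n" for n
    using int_pow_subgroup_generated g(1) by (simp add: K_def)
  have gG: "g \<in> carrier G" using g(1) cK generate_in_carrier[of "{x,y}"] x y by auto
  have gp: "g [^] p = \<one>" using exp g(1) cK by auto
  have p0: "p > 0" using p prime_gt_0_nat by blast
  have xK: "x \<in> carrier K" "y \<in> carrier K" using cK by (auto intro: generate.incl)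
  obtain a where "x = g [^] (a::int)" using xK(1) g(2) pw by auto
  then have xa: "x = g [^] (nat (a mod int p))" using int_pow_mod_p[OF gG gp p0] by simp
  obtain b where "y = g [^] (b::int)" using xK(2) g(2) pw by auto
  then have yb: "y = g [^] (nat (b mod int p))" using int_pow_mod_p[OF gG gp p0] by simp
  obtain a' where a': "g = x [^] (a'::nat)" using prime_pow_inverse[OF x gG gp p xa x1] by blast
  have "y = x [^] (a' * nat (b mod int p))" using yb a' x by (simp add: nat_pow_pow)
  then show ?thesis by blast
qed

lemma (in group) cyclic_pair:
  assumes x: "x \<in> carrier G" and y: "y = x [^] (k::nat)"
  shows "cyclic_group (subgroup_generated G {x, y})"
proof -
  have yc: "y \<in> carrier G" using x y by simp
  have "generate G {x, y} \<subseteq> generate G {x}"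
  proof (rule generate_subgroup_incl)
    show "subgroup (generate G {x}) G" using x by (simp add: generate_is_subgroup)
    have "subgroup (generate G {x}) G" using x by (simp add: generate_is_subgroup)
    have "x \<in> generate G {x}" by (simp add: generate.incl)
    moreover have "y \<in> generate G {x}"
      using y subgroup_int_pow_closed[OF \<open>subgroup (generate G {x}) G\<close> \<open>x \<in> generate G {x}\<close>, of "int k"] x
      by (simp add: int_pow_int)
    ultimately show "{x, y} \<subseteq> generate G {x}" by simp
  qed
  moreover have "generate G {x} \<subseteq> generate G {x, y}" by (rule mono_generate) auto
  ultimately have "generate G {x, y} = generate G {x}" by blast
  then have "subgroup_generated G {x, y} = subgroup_generated G {x}"
    using x yc by (simp add: subgroup_generated_def Int_absorb1)
  then show ?thesis by (simp add: cyclic_group_generated)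
qed

context stemx
begin

lemma enh_imp_deep:
  assumes x: "x \<in> carrier G" and y: "y \<in> carrier G" and xy: "x \<noteq> y"
    and cyc: "cyclic_group (subgroup_generated G {x, y})"
  shows "x \<noteq> y \<and> (\<forall>x' \<in> carrier H. \<forall>y' \<in> carrier H. \<pi> x' = x \<longrightarrow> \<pi> y' = y \<longrightarrow>
        x' \<otimes>\<^bsub>H\<^esub> y' = y' \<otimes>\<^bsub>H\<^esub> x')"
proof -
  define K where "K = subgroup_generated G {x, y}"
  have cK: "carrier K = generate G {x, y}"
    using x y by (simp add: K_def carrier_subgroup_generated Int_absorb1)
  have gK: "group K" by (simp add: K_def)
  obtain g where g: "g \<in> carrier K" "carrier K = range (\<lambda>n::int. g [^]\<^bsub>K\<^esub> n)"
    using cyc group.cyclic_group[OF gK] by (auto simp: K_def)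
  have pw: "g [^]\<^bsub>K\<^esub> (n::int) = g [^]\<^bsub>G\<^esub> n" for n
    using G.int_pow_subgroup_generated g(1) by (simp add: K_def)
  have gG: "g \<in> carrier G" using g(1) cK G.generate_in_carrier[of "{x,y}"] x y by auto
  have xK: "x \<in> carrier K" "y \<in> carrier K" using cK by (auto intro: generate.incl)
  obtain a where a: "x = g [^]\<^bsub>G\<^esub> (a::int)" using xK(1) g(2) pw by auto
  obtain b where b: "y = g [^]\<^bsub>G\<^esub> (b::int)" using xK(2) g(2) pw by auto
  obtain g' where g': "g' \<in> carrier H" "\<pi> g' = g" using gG surj by (metis imageE)
  have pa: "\<pi> (g' [^]\<^bsub>H\<^esub> a) = x" "\<pi> (g' [^]\<^bsub>H\<^esub> b) = y"
    using group_hom.hom_int_pow[OF gh g'(1)] g' a b by auto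
  have cm: "g' [^]\<^bsub>H\<^esub> a \<otimes>\<^bsub>H\<^esub> g' [^]\<^bsub>H\<^esub> b = g' [^]\<^bsub>H\<^esub> b \<otimes>\<^bsub>H\<^esub> g' [^]\<^bsub>H\<^esub> a"
    using g' by (simp add: H.int_pow_mult[symmetric] add.commute)
  show ?thesis
  proof (intro conjI ballI impI)
    show "x \<noteq> y" by (rule xy)
    fix x' y' assume "x' \<in> carrier H" "y' \<in> carrier H" "\<pi> x' = x" "\<pi> y' = y"
    then show "x' \<otimes>\<^bsub>H\<^esub> y' = y' \<otimes>\<^bsub>H\<^esub> x'"
      using lift_comm[of "g' [^]\<^bsub>H\<^esub> a" x' "g' [^]\<^bsub>H\<^esub> b" y'] pa cm g' by simp
  qed
qed

end


lemma (in group) pow_mod_p':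
  assumes g: "g \<in> carrier G" and gp: "g [^] (p::nat) = \<one>"
  shows "g [^] (m::nat) = g [^] (m mod p)"
proof -
  have "g [^] m = g [^] (p * (m div p) + m mod p)" by simp
  also have "\<dots> = g [^] (p * (m div p)) \<otimes> g [^] (m mod p)"
    using g by (simp only: nat_pow_mult)
  also have "\<dots> = (g [^] p) [^] (m div p) \<otimes> g [^] (m mod p)"
    using g by (simp only: nat_pow_pow)
  also have "\<dots> = g [^] (m mod p)" using g gp by simp
  finally show ?thesis .
qed

lemma (in group) pow_coprime_gen:
  assumes g: "g \<in> carrier G" and gp: "g [^] (p::nat) = \<one>" and p: "Factorial_Ring.prime p"
    and d: "0 < d" "d < p"
  shows "\<exists>u. (g [^] d) [^] (u::nat) = g"
proof -
  have "\<not> p dvd d" using d by (auto dest: dvd_imp_le)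
  then have "coprime p d" using p by (rule prime_imp_coprime[rotated])
  then have "gcd d p = 1" by (simp add: coprime_commute)
  then obtain u v where uv: "d * u = p * v + 1" using bezout_nat[of d p] d by auto
  have p1: "p > 1" using p prime_gt_1_nat by blast
  have "(g [^] d) [^] u = g [^] (d * u)" using g by (simp add: nat_pow_pow)
  also have "\<dots> = g [^] ((d * u) mod p)" using pow_mod_p'[OF g gp] by simp
  also have "(d * u) mod p = 1"
  proof -
    have "(d * u) mod p = (1 + v * p) mod p" using uv by (simp add: algebra_simps)
    also have "\<dots> = 1 mod p" by (rule mod_mult_self1)
    finally show ?thesis using p1 by simp
  qed
  finally show ?thesis using g by auto
qed

locale elem = comm_group G for G (structure) + fixes p :: nat
  assumes p: "Factorial_Ring.prime p" and expo: "\<And>g. g \<in> carrier G \<Longrightarrow> g [^] p = \<one>"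
    and fin: "finite (carrier G)"
begin

lemma p0: "p > 0" using p prime_gt_0_nat by blast

definition ext_set :: "'a set \<Rightarrow> 'a \<Rightarrow> 'a set" where
  "ext_set M g = (\<lambda>(m,j). m \<otimes> g [^] (j::nat)) ` (M \<times> {..<p})"

lemma ext_setI: "m \<in> M \<Longrightarrow> j < p \<Longrightarrow> m \<otimes> g [^] j \<in> ext_set M g"
  unfolding ext_set_def by (rule image_eqI[where x="(m, j)"]) auto

lemma ext_setE: "a \<in> ext_set M g \<Longrightarrow> (\<And>m j. m \<in> M \<Longrightarrow> j < p \<Longrightarrow> a = m \<otimes> g [^] j \<Longrightarrow> P) \<Longrightarrow> P"
  unfolding ext_set_def by auto

lemma ext_sub:
  assumes M: "subgroup M G" and g: "g \<in> carrier G"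
  shows "subgroup (ext_set M g) G"
proof (rule subgroupI)
  have Mc: "M \<subseteq> carrier G" using subgroup.subset[OF M] .
  show "ext_set M g \<subseteq> carrier G" using Mc g by (auto simp: ext_set_def)
  have "\<one> \<otimes> g [^] (0::nat) \<in> ext_set M g"
    using p0 subgroup.one_closed[OF M] by (intro ext_setI)
  then show "ext_set M g \<noteq> {}" by auto
next
  have Mc: "M \<subseteq> carrier G" using subgroup.subset[OF M] .
  fix a assume "a \<in> ext_set M g"
  then obtain m j where mj: "m \<in> M" "j < p" "a = m \<otimes> g [^] j" by (rule ext_setE)
  have mc: "m \<in> carrier G" using mj Mc by auto
  have e1: "g [^] ((p - j) mod p) = g [^] (p - j)"
    using pow_mod_p'[OF g expo[OF g], of "p - j"] by simp
  have "g [^] (p - j) \<otimes> g [^] j = g [^] (p - j + j)" using g by (simp only: nat_pow_mult)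
  also have "p - j + j = p" using mj(2) by simp
  finally have "g [^] ((p - j) mod p) \<otimes> g [^] j = \<one>" using e1 expo[OF g] by simp
  then have ick: "inv (g [^] j) = g [^] ((p - j) mod p)"
    by (rule inv_equality) (use g in simp_all)
  have "inv a = inv m \<otimes> inv (g [^] j)"
    unfolding mj(3) by (rule inv_mult[OF mc nat_pow_closed[OF g]])
  then have ia: "inv a = inv m \<otimes> g [^] ((p - j) mod p)" unfolding ick .
  have "inv m \<in> M" using subgroup.m_inv_closed[OF M mj(1)] .
  moreover have "(p - j) mod p < p" using p0 by simp
  ultimately show "inv a \<in> ext_set M g" unfolding ia by (rule ext_setI)
next
  have Mc: "M \<subseteq> carrier G" using subgroup.subset[OF M] .
  fix a b assume "a \<in> ext_set M g" "b \<in> ext_set M g"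
  then obtain m j m' j' where mj: "m \<in> M" "j < p" "a = m \<otimes> g [^] j"
    and mj': "m' \<in> M" "j' < p" "b = m' \<otimes> g [^] j'" by (metis ext_setE)
  have mc: "m \<in> carrier G" "m' \<in> carrier G" using mj mj' Mc by auto
  have "a \<otimes> b = (m \<otimes> m') \<otimes> (g [^] j \<otimes> g [^] j')"
  proof -
    have "a \<otimes> b = m \<otimes> (g [^] j \<otimes> m') \<otimes> g [^] j'" using mj mj' mc g by (simp add: m_assoc)
    also have "g [^] j \<otimes> m' = m' \<otimes> g [^] j" using mc g by (simp add: m_comm)
    finally show ?thesis using mc g by (simp add: m_assoc)
  qed
  also have "g [^] j \<otimes> g [^] j' = g [^] (j + j')" using g by (simp only: nat_pow_mult)
  also have "\<dots> = g [^] ((j + j') mod p)" using pow_mod_p'[OF g expo[OF g]] .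
  finally have ab: "a \<otimes> b = (m \<otimes> m') \<otimes> g [^] ((j + j') mod p)" .
  have "m \<otimes> m' \<in> M" using subgroup.m_closed[OF M mj(1) mj'(1)] .
  moreover have "(j + j') mod p < p" using p0 by simp
  ultimately show "a \<otimes> b \<in> ext_set M g" unfolding ab by (rule ext_setI)
qed

lemma max_ext:
  assumes Ms: "subgroup M G" and xM: "x \<notin> M" and x: "x \<in> carrier G"
    and Mmax: "\<And>S. subgroup S G \<Longrightarrow> M \<subseteq> S \<Longrightarrow> x \<notin> S \<Longrightarrow> card S \<le> card M"
    and g: "g \<in> carrier G"
  shows "\<exists>k<p. g \<otimes> inv (x [^] k) \<in> M"
proof (rule ccontr)
  have Mc: "M \<subseteq> carrier G" using subgroup.subset[OF Ms] .
  have xp: "x [^] p = \<one>" using expo x by simp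
  assume nk: "\<not> (\<exists>k<p. g \<otimes> inv (x [^] k) \<in> M)"
  have gM: "g \<notin> M"
  proof
    assume "g \<in> M"
    moreover have "g \<otimes> inv (x [^] (0::nat)) = g" using g by simp
    ultimately show False using nk p0 by auto
  qed
  define S where "S = ext_set M g"
  have Ss: "subgroup S G" unfolding S_def by (rule ext_sub[OF Ms g])
  have MS: "M \<subseteq> S"
  proof
    fix m assume m: "m \<in> M"
    then have "m = m \<otimes> g [^] (0::nat)" using Mc by auto
    moreover have "m \<otimes> g [^] (0::nat) \<in> S" unfolding S_def using m p0 by (rule ext_setI)
    ultimately show "m \<in> S" by simp
  qed
  have gS: "g \<in> S"
  proof -
    have "g = \<one> \<otimes> g [^] (1 mod p)" using g pow_mod_p'[OF g expo[OF g], of 1] by simp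
    moreover have "\<one> \<otimes> g [^] (1 mod p) \<in> S" unfolding S_def
      using Ms subgroup.one_closed p0 by (intro ext_setI) auto
    ultimately show ?thesis by simp
  qed
  have "card M < card S"
  proof (rule psubset_card_mono)
    show "finite S" using subgroup.subset[OF Ss] fin by (rule finite_subset)
    show "M \<subset> S" using MS gS gM by blast
  qed
  then have "x \<in> S" using Mmax[OF Ss MS] by fastforce
  then obtain m j where mj: "m \<in> M" "j < p" "x = m \<otimes> g [^] j" unfolding S_def by (rule ext_setE)
  have mc: "m \<in> carrier G" using mj Mc by auto
  show False
  proof (cases "j = 0")
    case True
    then show ?thesis using mj mc xM by simp
  next
    case False
    then have j0: "0 < j" by simp
    obtain u where u: "(g [^] j) [^] (u::nat) = g"
      using pow_coprime_gen[OF g expo[OF g] p j0 mj(2)] by blast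
    have gj: "g [^] j = inv m \<otimes> x" using mj mc g by (simp add: m_assoc[symmetric])
    have "g = (inv m \<otimes> x) [^] u" using u gj by simp
    also have "\<dots> = inv m [^] u \<otimes> x [^] u" using mc x by (simp add: pow_mult_distrib m_comm)
    finally have gg: "g \<otimes> inv (x [^] u) = inv m [^] u" using mc x by (simp add: m_assoc)
    have "inv m [^] u \<in> M"
      using mj Ms subgroup_int_pow_closed[of M "inv m" "int u"]
      by (simp add: int_pow_int subgroup.m_inv_closed)
    moreover have "x [^] u = x [^] (u mod p)" using pow_mod_p'[OF x xp] .
    ultimately have "g \<otimes> inv (x [^] (u mod p)) \<in> M" using gg by simp
    moreover have "u mod p < p" using p0 by simp
    ultimately show False using nk by blast
  qed
qed

lemma uniq_k:
  assumes Ms: "subgroup M G" and xM: "x \<notin> M" and x: "x \<in> carrier G" and g: "g \<in> carrier G"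
    and kk: "k1 < p" "k2 < p" "g \<otimes> inv (x [^] k1) \<in> M" "g \<otimes> inv (x [^] k2) \<in> M"
  shows "k1 = k2"
proof (rule ccontr)
  have xp: "x [^] p = \<one>" using expo x by simp
  assume ne: "k1 \<noteq> k2"
  have key: "x [^] (b - a) \<in> M" if ab: "a < b" "b < p" "g \<otimes> inv (x [^] a) \<in> M" "g \<otimes> inv (x [^] b) \<in> M" for a b
  proof -
    have "inv (g \<otimes> inv (x [^] b)) \<otimes> (g \<otimes> inv (x [^] a)) \<in> M"
      using ab Ms by (simp add: subgroup.m_closed subgroup.m_inv_closed)
    moreover have "inv (g \<otimes> inv (x [^] b)) \<otimes> (g \<otimes> inv (x [^] a)) = x [^] b \<otimes> inv (x [^] a)"
      using x g by (simp add: inv_mult_group m_assoc)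
    moreover have "x [^] b = x [^] (b - a) \<otimes> x [^] a" using ab x by (simp add: nat_pow_mult)
    ultimately show ?thesis using x by (simp add: m_assoc)
  qed
  obtain a b where ab: "a < b" "b < p" "g \<otimes> inv (x [^] a) \<in> M" "g \<otimes> inv (x [^] b) \<in> M"
  proof (cases "k1 < k2")
    case True
    then show ?thesis using kk by (intro that[of k1 k2]) auto
  next
    case False
    then have "k2 < k1" using ne by simp
    then show ?thesis using kk by (intro that[of k2 k1]) auto
  qed
  have xd: "x [^] (b - a) \<in> M" using key[OF ab] .
  have d: "0 < b - a" "b - a < p" using ab by auto
  obtain u where u: "(x [^] (b - a)) [^] (u::nat) = x"
    using pow_coprime_gen[OF x xp p d] by blast
  have "(x [^] (b - a)) [^] (u::nat) \<in> M"
    using xd Ms subgroup_int_pow_closed[of M "x [^] (b - a)" "int u"] by (simp add: int_pow_int)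
  then show False using xM u by simp
qed

lemma functional:
  assumes M0: "subgroup M0 G" and x: "x \<in> carrier G" and xM0: "x \<notin> M0"
  shows "\<exists>\<phi>. (\<forall>g\<in>carrier G. \<phi> g < p) \<and>
     (\<forall>g\<in>carrier G. \<forall>h\<in>carrier G. \<phi> (g \<otimes> h) = (\<phi> g + \<phi> h) mod p) \<and>
     \<phi> x = 1 \<and> (\<forall>m\<in>M0. \<phi> m = 0)"
proof -
  define MM where "MM = {M. subgroup M G \<and> M0 \<subseteq> M \<and> x \<notin> M}"
  have MMsub: "MM \<subseteq> Pow (carrier G)" by (auto simp: MM_def dest: subgroup.subset)
  have finMM: "finite MM" using finite_subset[OF MMsub] fin by simp
  have neMM: "M0 \<in> MM" using M0 xM0 by (simp add: MM_def)
  have "Max (card ` MM) \<in> card ` MM" using finMM neMM by (intro Max_in) auto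
  then obtain M where M: "M \<in> MM" "card M = Max (card ` MM)" by auto
  have Ms: "subgroup M G" "M0 \<subseteq> M" "x \<notin> M" using M(1) by (auto simp: MM_def)
  have Mmax: "card S \<le> card M" if "subgroup S G" "M \<subseteq> S" "x \<notin> S" for S
  proof -
    have "S \<in> MM" using that Ms(2) by (auto simp: MM_def)
    then show ?thesis using M(2) finMM by simp
  qed
  have xp: "x [^] p = \<one>" using expo x by simp
  define \<phi> where "\<phi> g = (THE k. k < p \<and> g \<otimes> inv (x [^] k) \<in> M)" for g
  have phi: "\<phi> g < p \<and> g \<otimes> inv (x [^] \<phi> g) \<in> M" if gg: "g \<in> carrier G" for g
  proof -
    obtain k where k: "k < p" "g \<otimes> inv (x [^] k) \<in> M"
      using max_ext[OF Ms(1) Ms(3) x Mmax gg] by blast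
    have "\<phi> g = k" unfolding \<phi>_def
    proof (rule the_equality)
      show "k < p \<and> g \<otimes> inv (x [^] k) \<in> M" using k by simp
      fix k' assume "k' < p \<and> g \<otimes> inv (x [^] k') \<in> M"
      then show "k' = k" using uniq_k[OF Ms(1) Ms(3) x gg, of k' k] k by simp
    qed
    then show ?thesis using k by simp
  qed
  have phi_eq: "\<phi> g = k" if gk: "g \<in> carrier G" "k < p" "g \<otimes> inv (x [^] k) \<in> M" for g k
  proof -
    have "\<phi> g < p" "g \<otimes> inv (x [^] \<phi> g) \<in> M" using phi[OF gk(1)] by auto
    then show ?thesis using uniq_k[OF Ms(1) Ms(3) x gk(1), of "\<phi> g" k] gk(2,3) by simp
  qed
  show ?thesis
  proof (intro exI[of _ \<phi>] conjI ballI)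
    fix g assume g: "g \<in> carrier G" show "\<phi> g < p" using phi[OF g] by (rule conjunct1)
  next
    fix g h assume g: "g \<in> carrier G" and h: "h \<in> carrier G"
    have "(g \<otimes> inv (x [^] \<phi> g)) \<otimes> (h \<otimes> inv (x [^] \<phi> h)) \<in> M"
      using subgroup.m_closed[OF Ms(1) conjunct2[OF phi[OF g]] conjunct2[OF phi[OF h]]] .
    moreover have "(g \<otimes> inv (x [^] \<phi> g)) \<otimes> (h \<otimes> inv (x [^] \<phi> h)) = (g \<otimes> h) \<otimes> inv (x [^] (\<phi> g + \<phi> h))"
    proof -
      have "x [^] (\<phi> g + \<phi> h) = x [^] \<phi> g \<otimes> x [^] \<phi> h" using x by (simp add: nat_pow_mult)
      then show ?thesis using g h x by (simp add: inv_mult m_ac)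
    qed
    moreover have "x [^] (\<phi> g + \<phi> h) = x [^] ((\<phi> g + \<phi> h) mod p)" using pow_mod_p'[OF x xp] .
    ultimately have "(g \<otimes> h) \<otimes> inv (x [^] ((\<phi> g + \<phi> h) mod p)) \<in> M" by simp
    moreover have "(\<phi> g + \<phi> h) mod p < p" using p0 by simp
    moreover have "g \<otimes> h \<in> carrier G" using g h by simp
    ultimately show "\<phi> (g \<otimes> h) = (\<phi> g + \<phi> h) mod p"
      using phi_eq by blast
  next
    have "x \<otimes> inv (x [^] (1::nat)) = \<one>" using x by simp
    then have "x \<otimes> inv (x [^] (1::nat)) \<in> M" using subgroup.one_closed[OF Ms(1)] by simp
    moreover have "(1::nat) < p" using p prime_gt_1_nat by blast
    ultimately show "\<phi> x = 1" using phi_eq[OF x] by blast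
  next
    fix m assume m: "m \<in> M0"
    have mc: "m \<in> carrier G" using m subgroup.subset[OF M0] by blast
    have "m \<otimes> inv (x [^] (0::nat)) = m" using mc by simp
    then have "m \<otimes> inv (x [^] (0::nat)) \<in> M" using m Ms(2) by auto
    then show "\<phi> m = 0" using phi_eq[OF mc p0] by blast
  qed
qed

end


definition Pgrp :: "('c,'d) monoid_scheme \<Rightarrow> ('c \<Rightarrow> 'a) \<Rightarrow> nat \<Rightarrow> ('a \<Rightarrow> nat) \<Rightarrow> ('a \<Rightarrow> nat) \<Rightarrow> ('c \<times> nat) monoid" where
  "Pgrp H \<pi> p \<phi> \<psi> = \<lparr>carrier = carrier H \<times> {..<p},
     monoid.mult = (\<lambda>u v. (fst u \<otimes>\<^bsub>H\<^esub> fst v, (snd u + snd v + \<phi> (\<pi> (fst u)) * \<psi> (\<pi> (fst v))) mod p)),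
     one = (\<one>\<^bsub>H\<^esub>, 0)\<rparr>"

locale pcons = stemx G H \<pi> for G H \<pi> + fixes p :: nat and \<phi> \<psi> :: "'a \<Rightarrow> nat"
  assumes p: "Factorial_Ring.prime p"
    and phi_lt: "\<And>g. g \<in> carrier G \<Longrightarrow> \<phi> g < p"
    and phi_hom: "\<And>g h. g \<in> carrier G \<Longrightarrow> h \<in> carrier G \<Longrightarrow> \<phi> (g \<otimes>\<^bsub>G\<^esub> h) = (\<phi> g + \<phi> h) mod p"
    and psi_lt: "\<And>g. g \<in> carrier G \<Longrightarrow> \<psi> g < p"
    and psi_hom: "\<And>g h. g \<in> carrier G \<Longrightarrow> h \<in> carrier G \<Longrightarrow> \<psi> (g \<otimes>\<^bsub>G\<^esub> h) = (\<psi> g + \<psi> h) mod p"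
begin

abbreviation "P \<equiv> Pgrp H \<pi> p \<phi> \<psi>"

lemma p1: "p > 1" using p prime_gt_1_nat by blast

lemma hom_one_zero:
  assumes lt: "z < p" and hm: "z = (z + z) mod p"
  shows "z = 0"
proof (cases "z + z < p")
  case True
  then show ?thesis using hm by simp
next
  case False
  then have "(z + z) mod p = (z + z - p) mod p" by (simp add: le_mod_geq)
  also have "\<dots> = z + z - p" using lt by simp
  finally show ?thesis using hm lt by linarith
qed

lemma phi1: "\<phi> \<one>\<^bsub>G\<^esub> = 0"
  using phi_hom[of "\<one>\<^bsub>G\<^esub>" "\<one>\<^bsub>G\<^esub>"] phi_lt[of "\<one>\<^bsub>G\<^esub>"] by (intro hom_one_zero) simp_all

lemma psi1: "\<psi> \<one>\<^bsub>G\<^esub> = 0"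
  using psi_hom[of "\<one>\<^bsub>G\<^esub>" "\<one>\<^bsub>G\<^esub>"] psi_lt[of "\<one>\<^bsub>G\<^esub>"] by (intro hom_one_zero) simp_all

lemma P_carrier [simp]: "carrier P = carrier H \<times> {..<p}"
  by (simp add: Pgrp_def)

lemma P_mult [simp]: "(h, a) \<otimes>\<^bsub>P\<^esub> (h', b) = (h \<otimes>\<^bsub>H\<^esub> h', (a + b + \<phi> (\<pi> h) * \<psi> (\<pi> h')) mod p)"
  by (simp add: Pgrp_def)

lemma P_fst_mult [simp]: "fst (u \<otimes>\<^bsub>P\<^esub> v) = fst u \<otimes>\<^bsub>H\<^esub> fst v"
  by (simp add: Pgrp_def)

lemma P_one [simp]: "\<one>\<^bsub>P\<^esub> = (\<one>\<^bsub>H\<^esub>, 0)"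
  by (simp add: Pgrp_def)

lemma assoc_arith:
  assumes g: "g1 \<in> carrier G" "g2 \<in> carrier G" "g3 \<in> carrier G"
  shows "((a + b + \<phi> g1 * \<psi> g2) mod p + c + \<phi> (g1 \<otimes>\<^bsub>G\<^esub> g2) * \<psi> g3) mod p =
         (a + (b + c + \<phi> g2 * \<psi> g3) mod p + \<phi> g1 * \<psi> (g2 \<otimes>\<^bsub>G\<^esub> g3)) mod p"
proof -
  have L: "((a + b + \<phi> g1 * \<psi> g2) mod p + c + \<phi> (g1 \<otimes>\<^bsub>G\<^esub> g2) * \<psi> g3) mod p
      = ((a + b + \<phi> g1 * \<psi> g2) + c + (\<phi> g1 + \<phi> g2) * \<psi> g3) mod p"
    by (intro mod_add_cong mod_mult_cong) (simp_all add: phi_hom g)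
  have R: "(a + (b + c + \<phi> g2 * \<psi> g3) mod p + \<phi> g1 * \<psi> (g2 \<otimes>\<^bsub>G\<^esub> g3)) mod p
      = (a + (b + c + \<phi> g2 * \<psi> g3) + \<phi> g1 * (\<psi> g2 + \<psi> g3)) mod p"
    by (intro mod_add_cong mod_mult_cong) (simp_all add: psi_hom g)
  have "(a + b + \<phi> g1 * \<psi> g2) + c + (\<phi> g1 + \<phi> g2) * \<psi> g3
      = a + (b + c + \<phi> g2 * \<psi> g3) + \<phi> g1 * (\<psi> g2 + \<psi> g3)"
    by (simp add: algebra_simps)
  then show ?thesis unfolding L R by (rule arg_cong)
qed

lemma P_group: "group P"
proof (rule groupI)
  fix x y assume "x \<in> carrier P" "y \<in> carrier P"
  then show "x \<otimes>\<^bsub>P\<^esub> y \<in> carrier P" using p1 by (auto simp: Pgrp_def)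
next
  show "\<one>\<^bsub>P\<^esub> \<in> carrier P" using p1 by simp
next
  fix x y z assume "x \<in> carrier P" "y \<in> carrier P" "z \<in> carrier P"
  then obtain h1 a h2 b h3 c where xyz: "x = (h1, a)" "y = (h2, b)" "z = (h3, c)"
    "h1 \<in> carrier H" "h2 \<in> carrier H" "h3 \<in> carrier H" by auto
  show "x \<otimes>\<^bsub>P\<^esub> y \<otimes>\<^bsub>P\<^esub> z = x \<otimes>\<^bsub>P\<^esub> (y \<otimes>\<^bsub>P\<^esub> z)"
    using xyz assoc_arith[of "\<pi> h1" "\<pi> h2" "\<pi> h3" a b c]
    by (simp add: H.m_assoc pi_mult pi_closed)
next
  fix x assume "x \<in> carrier P"
  then obtain h a where x: "x = (h, a)" "h \<in> carrier H" "a < p" by auto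
  show "\<one>\<^bsub>P\<^esub> \<otimes>\<^bsub>P\<^esub> x = x" using x by (simp add: pi_one phi1)
next
  fix x assume "x \<in> carrier P"
  then obtain h a where x: "x = (h, a)" "h \<in> carrier H" "a < p" by auto
  define c where "c = (p - (a + \<phi> (\<pi> (inv\<^bsub>H\<^esub> h)) * \<psi> (\<pi> h)) mod p) mod p"
  have "(c + a + \<phi> (\<pi> (inv\<^bsub>H\<^esub> h)) * \<psi> (\<pi> h)) mod p = 0"
  proof -
    define s where "s = a + \<phi> (\<pi> (inv\<^bsub>H\<^esub> h)) * \<psi> (\<pi> h)"
    have "(c + s) mod p = ((p - s mod p) + s) mod p" by (simp add: c_def s_def mod_simps)
    also have "\<dots> = ((p - s mod p) + s mod p) mod p" by (simp add: mod_simps)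
    also have "\<dots> = 0" using p1 by simp
    finally show ?thesis by (simp add: s_def add.assoc)
  qed
  moreover have "c < p" using p1 by (simp add: c_def)
  ultimately show "\<exists>y\<in>carrier P. y \<otimes>\<^bsub>P\<^esub> x = \<one>\<^bsub>P\<^esub>"
    using x by (intro bexI[of _ "(inv\<^bsub>H\<^esub> h, c)"]) auto
qed

lemma fst_hom: "fst \<in> hom P H"
  by (auto simp: hom_def Pgrp_def)

lemma fst_group_hom: "group_hom P H fst"
  using fst_hom P_group H.group_axioms by (simp add: group_hom_def group_hom_axioms_def)

lemma fst_inv: "u \<in> carrier P \<Longrightarrow> fst (inv\<^bsub>P\<^esub> u) = inv\<^bsub>H\<^esub> (fst u)"
  using group_hom.hom_inv[OF fst_group_hom] by simp

lemma P_hom: "\<pi> \<circ> fst \<in> hom P G"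
  by (auto simp: hom_def Pgrp_def pi_mult pi_closed)

lemma P_surj: "(\<pi> \<circ> fst) ` carrier P = carrier G"
proof -
  have "fst ` carrier P = carrier H" using p1 by (auto simp: image_iff intro: exI[of _ 0])
  moreover have "(\<pi> \<circ> fst) ` carrier P = \<pi> ` (fst ` carrier P)" by (rule image_comp[symmetric])
  ultimately show ?thesis using surj by simp
qed

lemma P_kernel: "kernel P G (\<pi> \<circ> fst) = {u. fst u \<in> kernel H G \<pi> \<and> snd u < p}"
  by (auto simp: kernel_def)

lemma P_center: "kernel P G (\<pi> \<circ> fst) \<subseteq> group_center P"
proof
  fix u assume "u \<in> kernel P G (\<pi> \<circ> fst)"
  then obtain k a where u: "u = (k, a)" "k \<in> carrier H" "\<pi> k = \<one>\<^bsub>G\<^esub>" "a < p"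
    by (auto simp: kernel_def)
  show "u \<in> group_center P"
    unfolding group_center_def
  proof (intro CollectI conjI ballI)
    show "u \<in> carrier P" using u by simp
    fix v assume "v \<in> carrier P"
    then obtain h b where v: "v = (h, b)" "h \<in> carrier H" by auto
    show "u \<otimes>\<^bsub>P\<^esub> v = v \<otimes>\<^bsub>P\<^esub> u"
      using u v central[OF u(2) u(3) v(2)] by (simp add: phi1 psi1 add.commute)
  qed
qed

lemma P_order: "order P = order H * p"
  by (simp add: order_def card_cartesian_product)

lemma P_fin: "finite (carrier H) \<Longrightarrow> finite (carrier P)"
  by simp

lemma P_derived:
  assumes kd: "kernel H G \<pi> \<subseteq> derived H (carrier H)"
    and x': "x' \<in> carrier H" and y': "y' \<in> carrier H"
    and xy: "x' \<otimes>\<^bsub>H\<^esub> y' = y' \<otimes>\<^bsub>H\<^esub> x'"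
    and phx: "\<phi> (\<pi> x') = 1" and phy: "\<phi> (\<pi> y') = 0"
    and psx: "\<psi> (\<pi> x') = 0" and psy: "\<psi> (\<pi> y') = 1"
  shows "kernel P G (\<pi> \<circ> fst) \<subseteq> derived P (carrier P)"
proof -
  interpret PG: group P by (rule P_group)
  define D where "D = derived P (carrier P)"
  have Dsub: "subgroup D P" unfolding D_def by (rule PG.derived_is_subgroup) simp
  have Dc: "D \<subseteq> carrier P" using subgroup.subset[OF Dsub] .
  have comm_in: "u \<otimes>\<^bsub>P\<^esub> v \<otimes>\<^bsub>P\<^esub> inv\<^bsub>P\<^esub> u \<otimes>\<^bsub>P\<^esub> inv\<^bsub>P\<^esub> v \<in> D"
    if "u \<in> carrier P" "v \<in> carrier P" for u v
    unfolding D_def derived_def using that by (intro generate.incl) blast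
  define e1 where "e1 = (\<one>\<^bsub>H\<^esub>, 1::nat)"
  have e1c: "e1 \<in> carrier P" using p1 by (simp add: e1_def)
  have e1D: "e1 \<in> D"
  proof -
    define u where "u = (x', 0::nat)"
    define v where "v = (y', 0::nat)"
    have uv: "u \<in> carrier P" "v \<in> carrier P" using x' y' p1 by (auto simp: u_def v_def)
    have vu: "v \<otimes>\<^bsub>P\<^esub> u = (x' \<otimes>\<^bsub>H\<^esub> y', 0)" using xy phy psx by (simp add: u_def v_def)
    have "u \<otimes>\<^bsub>P\<^esub> v = (x' \<otimes>\<^bsub>H\<^esub> y', 1)" using phx psy p1 by (simp add: u_def v_def)
    also have "\<dots> = e1 \<otimes>\<^bsub>P\<^esub> (v \<otimes>\<^bsub>P\<^esub> u)" using vu x' y' p1 by (simp add: e1_def pi_one phi1)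
    finally have uve: "u \<otimes>\<^bsub>P\<^esub> v = e1 \<otimes>\<^bsub>P\<^esub> (v \<otimes>\<^bsub>P\<^esub> u)" .
    have "u \<otimes>\<^bsub>P\<^esub> v \<otimes>\<^bsub>P\<^esub> inv\<^bsub>P\<^esub> u \<otimes>\<^bsub>P\<^esub> inv\<^bsub>P\<^esub> v = (u \<otimes>\<^bsub>P\<^esub> v) \<otimes>\<^bsub>P\<^esub> inv\<^bsub>P\<^esub> (v \<otimes>\<^bsub>P\<^esub> u)"
      using uv by (simp del: P_carrier add: PG.inv_mult_group PG.m_assoc)
    also have "\<dots> = e1" using uv e1c by (simp only: uve) (simp del: P_carrier P_one add: PG.m_assoc)
    finally show ?thesis using comm_in[OF uv] by simp
  qed
  have e1pow: "e1 [^]\<^bsub>P\<^esub> (k::nat) = (\<one>\<^bsub>H\<^esub>, k mod p)" for k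
  proof (induction k)
    case 0 then show ?case by simp
  next
    case (Suc k)
    then show ?case by (simp add: e1_def pi_one phi1 psi1 mod_simps)
  qed
  have e1powD: "e1 [^]\<^bsub>P\<^esub> (k::nat) \<in> D" for k
    using PG.subgroup_int_pow_closed[OF Dsub e1D, of "int k"] by (simp add: int_pow_int)
  have shift: "(k, a) \<in> D" if kb: "(k, b) \<in> D" "a < p" for k a b
  proof -
    have kc: "k \<in> carrier H" "b < p" using kb(1) Dc by auto
    have "(k, b) \<otimes>\<^bsub>P\<^esub> e1 [^]\<^bsub>P\<^esub> (a + p - b) \<in> D"
      using subgroup.m_closed[OF Dsub kb(1) e1powD] .
    moreover have "(k, b) \<otimes>\<^bsub>P\<^esub> e1 [^]\<^bsub>P\<^esub> (a + p - b) = (k, a)"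
    proof -
      have "(b + (a + p - b) mod p) mod p = (b + (a + p - b)) mod p" by (simp add: mod_simps)
      also have "\<dots> = (a + p) mod p" using kc(2) by simp
      also have "\<dots> = a" using kb(2) by simp
      finally show ?thesis using kc by (simp add: e1pow pi_one psi1)
    qed
    ultimately show ?thesis by simp
  qed
  have gen: "k \<in> generate H (derived_set H (carrier H)) \<Longrightarrow> \<forall>a<p. (k, a) \<in> D" for k
  proof (induction rule: generate.induct)
    case one
    show ?case
    proof (intro allI impI)
      fix a assume a: "a < p"
      have "e1 [^]\<^bsub>P\<^esub> a = (\<one>\<^bsub>H\<^esub>, a)" using a by (simp add: e1pow)
      then show "(\<one>\<^bsub>H\<^esub>, a) \<in> D" using e1powD[of a] by simp
    qed
  next
    case (incl h)
    then obtain h1 h2 where h: "h1 \<in> carrier H" "h2 \<in> carrier H"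
      "h = h1 \<otimes>\<^bsub>H\<^esub> h2 \<otimes>\<^bsub>H\<^esub> inv\<^bsub>H\<^esub> h1 \<otimes>\<^bsub>H\<^esub> inv\<^bsub>H\<^esub> h2" by blast
    define w where "w = (h1, 0::nat) \<otimes>\<^bsub>P\<^esub> (h2, 0::nat) \<otimes>\<^bsub>P\<^esub> inv\<^bsub>P\<^esub> (h1, 0::nat) \<otimes>\<^bsub>P\<^esub> inv\<^bsub>P\<^esub> (h2, 0::nat)"
    have hc: "(h1, 0::nat) \<in> carrier P" "(h2, 0::nat) \<in> carrier P" using h p1 by auto
    have wD: "w \<in> D" unfolding w_def by (rule comm_in[OF hc])
    have wc: "w \<in> carrier P" using wD Dc by auto
    have "fst w = h" using hc h(3) by (simp add: w_def fst_inv)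
    then have "(h, snd w) \<in> D" using wD by (metis prod.collapse)
    then show ?case using shift by blast
  next
    case (inv h)
    then obtain h1 h2 where h: "h1 \<in> carrier H" "h2 \<in> carrier H"
      "h = h1 \<otimes>\<^bsub>H\<^esub> h2 \<otimes>\<^bsub>H\<^esub> inv\<^bsub>H\<^esub> h1 \<otimes>\<^bsub>H\<^esub> inv\<^bsub>H\<^esub> h2" by blast
    define w where "w = (h1, 0::nat) \<otimes>\<^bsub>P\<^esub> (h2, 0::nat) \<otimes>\<^bsub>P\<^esub> inv\<^bsub>P\<^esub> (h1, 0::nat) \<otimes>\<^bsub>P\<^esub> inv\<^bsub>P\<^esub> (h2, 0::nat)"
    have hc: "(h1, 0::nat) \<in> carrier P" "(h2, 0::nat) \<in> carrier P" using h p1 by auto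
    have wD: "w \<in> D" unfolding w_def by (rule comm_in[OF hc])
    have wc: "w \<in> carrier P" using wD Dc by auto
    have "fst w = h" using hc h(3) by (simp add: w_def fst_inv)
    have iwD: "inv\<^bsub>P\<^esub> w \<in> D" using subgroup.m_inv_closed[OF Dsub wD] .
    have "fst (inv\<^bsub>P\<^esub> w) = inv\<^bsub>H\<^esub> h" using wc \<open>fst w = h\<close> by (simp add: fst_inv)
    then have "(inv\<^bsub>H\<^esub> h, snd (inv\<^bsub>P\<^esub> w)) \<in> D" using iwD by (metis prod.collapse)
    then show ?case using shift by blast
  next
    case (eng h1 h2)
    have a: "(h1, 0) \<in> D" "(h2, 0) \<in> D" using eng.IH p1 by auto
    have c: "h1 \<in> carrier H" "h2 \<in> carrier H" using a Dc by auto
    have "(h1, 0) \<otimes>\<^bsub>P\<^esub> (h2, 0) \<in> D" using subgroup.m_closed[OF Dsub a(1) a(2)] .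
    then have "(h1 \<otimes>\<^bsub>H\<^esub> h2, (\<phi> (\<pi> h1) * \<psi> (\<pi> h2)) mod p) \<in> D" by simp
    then show ?case using shift by blast
  qed
  show ?thesis
  proof
    fix u assume "u \<in> kernel P G (\<pi> \<circ> fst)"
    then obtain k a where u: "u = (k, a)" "k \<in> kernel H G \<pi>" "a < p"
      by (auto simp: kernel_def)
    have "k \<in> generate H (derived_set H (carrier H))" using u(2) kd by (auto simp: derived_def)
    then have "(k, a) \<in> D" using gen u(3) by blast
    then show "u \<in> derived P (carrier P)" using u(1) by (simp add: D_def)
  qed
qed

end

lemma schur_comm_contra:
  fixes G :: "('a,'b) monoid_scheme" and H :: "nat monoid" and \<pi> :: "nat \<Rightarrow> 'a"
    and p :: nat and \<phi> \<psi> :: "'a \<Rightarrow> nat"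
  assumes G: "comm_group G" and sc: "schur_cover G H \<pi>" and p: "Factorial_Ring.prime p"
    and phi_lt: "\<And>g. g \<in> carrier G \<Longrightarrow> \<phi> g < p"
    and phi_hom: "\<And>g h. g \<in> carrier G \<Longrightarrow> h \<in> carrier G \<Longrightarrow> \<phi> (g \<otimes>\<^bsub>G\<^esub> h) = (\<phi> g + \<phi> h) mod p"
    and psi_lt: "\<And>g. g \<in> carrier G \<Longrightarrow> \<psi> g < p"
    and psi_hom: "\<And>g h. g \<in> carrier G \<Longrightarrow> h \<in> carrier G \<Longrightarrow> \<psi> (g \<otimes>\<^bsub>G\<^esub> h) = (\<psi> g + \<psi> h) mod p"
    and x': "x' \<in> carrier H" and y': "y' \<in> carrier H"
    and phx: "\<phi> (\<pi> x') = 1" and phy: "\<phi> (\<pi> y') = 0"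
    and psx: "\<psi> (\<pi> x') = 0" and psy: "\<psi> (\<pi> y') = 1"
  shows "x' \<otimes>\<^bsub>H\<^esub> y' \<noteq> y' \<otimes>\<^bsub>H\<^esub> x'"
proof
  assume xy: "x' \<otimes>\<^bsub>H\<^esub> y' = y' \<otimes>\<^bsub>H\<^esub> x'"
  have st: "group H" "finite (carrier H)" "\<pi> \<in> hom H G" "\<pi> ` carrier H = carrier G"
     "kernel H G \<pi> \<subseteq> group_center H" "kernel H G \<pi> \<subseteq> derived H (carrier H)"
    using sc by (auto simp: schur_cover_def stem_extension_def)
  interpret pcons G H \<pi> p \<phi> \<psi>
    using G st p phi_lt phi_hom psi_lt psi_hom
    by (simp add: pcons_def pcons_axioms_def stemx_def stemx_axioms_def comm_group_def)
  have sP: "stem_gen G P (\<pi> \<circ> fst)"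
    unfolding stem_gen_def
    using P_group st(2) P_hom P_surj P_center P_derived[OF st(6) x' y' xy phx phy psx psy]
    by simp
  have inj: "inj_on prod_encode (carrier P)" by (rule inj_prod_encode)
  have sT: "stem_extension G (transp P prod_encode) (\<pi> \<circ> fst \<circ> inv_into (carrier P) prod_encode)"
    using transp_stem[OF P_group inj sP] .
  then have "order (transp P prod_encode) \<le> order H"
    using sc by (auto simp: schur_cover_def)
  moreover have "order (transp P prod_encode) = order H * p"
    using transp_order[OF P_group inj] P_order by simp
  moreover have "order H > 0" using st(2) H.order_gt_0_iff_finite by blast
  ultimately show False using p1 by simp
qed



lemma (in comm_group) nonelem_pair:
  assumes fin: "finite (carrier G)" and p: "Factorial_Ring.prime p" and ordG: "order G = p ^ n"
    and nc: "\<not> cyclic_group G" and ne: "x \<in> carrier G" "x \<noteq> \<one>" "ord x \<noteq> p"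
  shows "\<exists>h\<in>carrier G. \<exists>y0\<in>carrier G. h [^] p \<noteq> \<one> \<and> (h [^] p) [^] p = \<one> \<and> y0 [^] p = \<one>
           \<and> (\<forall>j::nat. y0 \<noteq> (h [^] p) [^] j)"
proof -
  have p1: "p > 1" using p prime_gt_1_nat by blast
  have ordpow: "\<exists>i\<le>n. ord z = p ^ i" if "z \<in> carrier G" for z
    using ord_dvd_group_order[OF that] ordG divides_primepow_nat[OF p] by simp
  have "Max (ord ` carrier G) \<in> ord ` carrier G" using fin ne(1) by (intro Max_in) auto
  then obtain g where g: "g \<in> carrier G" "ord g = Max (ord ` carrier G)" by auto
  have gmax: "ord z \<le> ord g" if "z \<in> carrier G" for z using g(2) fin that by simp
  obtain k where k: "ord g = p ^ k" using ordpow[OF g(1)] by blast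
  obtain j where j: "ord x = p ^ j" using ordpow[OF ne(1)] by blast
  have "j \<noteq> 0"
  proof
    assume "j = 0"
    then have "ord x = 1" using j by simp
    then show False using ord_eq_1[OF ne(1)] ne(2) by simp
  qed
  moreover have "j \<noteq> 1" using j ne by auto
  ultimately have j2: "j \<ge> 2" by simp
  have "p ^ j \<le> p ^ k" using gmax[OF ne(1)] j k by simp
  then have "j \<le> k" using p1 by simp
  then have k2: "k \<ge> 2" using j2 by simp
  have expo: "z [^] (p ^ k) = \<one>" if z: "z \<in> carrier G" for z
  proof -
    obtain i where i: "ord z = p ^ i" using ordpow[OF z] by blast
    have "p ^ i \<le> p ^ k" using gmax[OF z] i k by simp
    then have "i \<le> k" using p1 by simp
    then have "ord z dvd p ^ k" using i by (simp add: le_imp_power_dvd)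
    then show ?thesis using pow_eq_id[OF z] by simp
  qed
  have gk1: "g [^] (p ^ (k - 1)) \<noteq> \<one>"
  proof
    assume "g [^] (p ^ (k - 1)) = \<one>"
    then have "p ^ k dvd p ^ (k - 1)" using pow_eq_id[OF g(1)] k by simp
    then have "p ^ k \<le> p ^ (k - 1)" by (rule dvd_imp_le) (use p1 in simp)
    then have "k \<le> k - 1" using p1 by simp
    then show False using k2 by simp
  qed
  have "\<exists>y\<in>carrier G. \<forall>m::nat. y \<noteq> g [^] m"
  proof (rule ccontr)
    assume "\<not> (\<exists>y\<in>carrier G. \<forall>m::nat. y \<noteq> g [^] m)"
    then have all: "\<forall>y\<in>carrier G. \<exists>m::nat. y = g [^] m" by blast
    have "carrier G = range (\<lambda>n::int. g [^] n)"
    proof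
      show "carrier G \<subseteq> range (\<lambda>n::int. g [^] n)"
      proof
        fix y assume "y \<in> carrier G"
        then obtain m :: nat where "y = g [^] m" using all by blast
        then have "y = g [^] (int m)" by (simp add: int_pow_int)
        then show "y \<in> range (\<lambda>n::int. g [^] n)" by blast
      qed
      show "range (\<lambda>n::int. g [^] n) \<subseteq> carrier G" using g(1) by auto
    qed
    then have "cyclic_group G" using cyclic_group g(1) by blast
    with nc show False ..
  qed
  then obtain y1 where y1: "y1 \<in> carrier G" "\<forall>m::nat. y1 \<noteq> g [^] m" by blast
  obtain y where y: "y \<in> carrier G \<and> (\<forall>m::nat. y \<noteq> g [^] m)"
    and ymin: "\<And>z. z \<in> carrier G \<and> (\<forall>m::nat. z \<noteq> g [^] m) \<Longrightarrow> ord y \<le> ord z"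
    using ex_has_least_nat[of "\<lambda>z. z \<in> carrier G \<and> (\<forall>m::nat. z \<noteq> g [^] m)" y1 ord] y1 by blast
  have yc: "y \<in> carrier G" using y by blast
  have y1': "y \<noteq> \<one>" using y by (metis nat_pow_0)
  obtain i where i: "ord y = p ^ i" using ordpow[OF yc] by blast
  have i0: "i \<ge> 1" using i y1' ord_eq_1[OF yc] by (cases i) auto
  have "\<exists>m::nat. y [^] p = g [^] m"
  proof (rule ccontr)
    assume nin: "\<not> (\<exists>m::nat. y [^] p = g [^] m)"
    have "(y [^] p) [^] (p ^ (i - 1)) = y [^] (p ^ i)"
      using yc i0 by (simp add: nat_pow_pow power_eq_if[of p i] mult.commute)
    also have "\<dots> = \<one>" using pow_ord_eq_1[OF yc] unfolding i .
    finally have "ord (y [^] p) dvd p ^ (i - 1)" using pow_eq_id yc by simp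
    then have "ord (y [^] p) \<le> p ^ (i - 1)" by (rule dvd_imp_le) (use p1 in simp)
    also have "\<dots> < p ^ i" using p1 i0 by simp
    finally have "ord (y [^] p) < ord y" using i by simp
    moreover have "ord y \<le> ord (y [^] p)" using ymin[of "y [^] p"] nin yc by auto
    ultimately show False by simp
  qed
  then obtain m :: nat where m: "y [^] p = g [^] m" by blast
  have pm: "p dvd m"
  proof (rule ccontr)
    assume "\<not> p dvd m"
    then have "coprime p m" using p by (rule prime_imp_coprime[rotated])
    then have "coprime (p ^ k) m" by simp
    then have "gcd m (p ^ k) = 1" by (simp add: coprime_commute)
    moreover have "m \<noteq> 0" using \<open>\<not> p dvd m\<close> by (cases m) auto
    ultimately obtain u v where uv: "m * u = p ^ k * v + 1" using bezout_nat[of m "p ^ k"] by auto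
    have gpk: "g [^] (p ^ k) = \<one>" using expo g(1) by simp
    have "(y [^] p) [^] u = g [^] (m * u)" using m g(1) by (simp add: nat_pow_pow)
    also have "\<dots> = g [^] ((m * u) mod (p ^ k))" using pow_mod_p'[OF g(1) gpk] by simp
    also have "(m * u) mod (p ^ k) = 1"
    proof -
      have "(m * u) mod p ^ k = (1 + v * p ^ k) mod p ^ k" using uv by (simp add: algebra_simps)
      also have "\<dots> = 1 mod p ^ k" by (rule mod_mult_self1)
      also have "\<dots> = 1" using p1 k2 by simp
      finally show ?thesis .
    qed
    finally have gy: "g = y [^] (p * u)" using g(1) yc by (simp add: nat_pow_pow)
    have "g [^] (p ^ (k - 1)) = y [^] (p ^ k * u)"
    proof -
      have pk: "p * p ^ (k - 1) = p ^ k" using k2 by (simp add: power_eq_if[of p k])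
      have "g [^] (p ^ (k - 1)) = y [^] (p * u * p ^ (k - 1))" using gy yc by (simp add: nat_pow_pow)
      also have "p * u * p ^ (k - 1) = p ^ k * u" using pk by (metis mult.commute mult.left_commute)
      finally show ?thesis .
    qed
    also have "\<dots> = (y [^] (p ^ k)) [^] u" using yc by (simp add: nat_pow_pow)
    also have "\<dots> = \<one>" using expo[OF yc] by simp
    finally show False using gk1 by simp
  qed
  then obtain m' where m': "m = p * m'" by blast
  define y0 where "y0 = y \<otimes> inv (g [^] m')"
  have y0c: "y0 \<in> carrier G" using yc g(1) by (simp add: y0_def)
  have y0p: "y0 [^] p = \<one>"
  proof -
    have "y0 [^] p = y [^] p \<otimes> (inv (g [^] m')) [^] p"
      using yc g(1) by (simp add: y0_def pow_mult_distrib m_comm)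
    also have "(inv (g [^] m')) [^] p = inv (g [^] m)"
      using g(1) by (simp add: nat_pow_inv nat_pow_pow m' mult.commute)
    finally show ?thesis using m g(1) by simp
  qed
  have y0n: "\<forall>t::nat. y0 \<noteq> g [^] t"
  proof (intro allI notI)
    fix t :: nat assume "y0 = g [^] t"
    moreover have "y = (y \<otimes> inv (g [^] m')) \<otimes> g [^] m'" using yc g(1) by (simp add: m_assoc)
    ultimately have "y = g [^] t \<otimes> g [^] m'" by (simp add: y0_def)
    then have "y = g [^] (t + m')" using g(1) by (simp add: nat_pow_mult)
    then show False using y by blast
  qed
  define h where "h = g [^] (p ^ (k - 2))"
  have hc: "h \<in> carrier G" using g(1) by (simp add: h_def)
  have hp: "h [^] p = g [^] (p ^ (k - 1))"
  proof -
    obtain r where r: "k = r + 2" using k2 by (metis le_add_diff_inverse2)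
    have "p ^ (k - 2) * p = p ^ (k - 1)" unfolding r by simp
    then show ?thesis using g(1) by (simp add: h_def nat_pow_pow)
  qed
  have hpp: "(h [^] p) [^] p = \<one>"
  proof -
    obtain r where r: "k = r + 2" using k2 by (metis le_add_diff_inverse2)
    have "p ^ (k - 1) * p = p ^ k" unfolding r by simp
    then show ?thesis using g(1) expo[OF g(1)] by (simp add: hp nat_pow_pow)
  qed
  have notin: "\<forall>j::nat. y0 \<noteq> (h [^] p) [^] j"
  proof (intro allI notI)
    fix j :: nat assume "y0 = (h [^] p) [^] j"
    then have "y0 = g [^] (p ^ (k - 1) * j)" using g(1) by (simp add: hp nat_pow_pow)
    then show False using y0n by blast
  qed
  have "h [^] p \<noteq> \<one>" using gk1 hp by simp
  then show ?thesis using hc y0c hpp y0p notin by blast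
qed



lemma (in comm_group) pexp_subgroup: "subgroup {z \<in> carrier G. z [^] (p::nat) = \<one>} G"
proof (rule subgroupI)
  show "{z \<in> carrier G. z [^] p = \<one>} \<subseteq> carrier G" by auto
  have "\<one> \<in> {z \<in> carrier G. z [^] p = \<one>}" by simp
  then show "{z \<in> carrier G. z [^] p = \<one>} \<noteq> {}" by blast
next
  fix a assume "a \<in> {z \<in> carrier G. z [^] p = \<one>}"
  then show "inv a \<in> {z \<in> carrier G. z [^] p = \<one>}" by (simp add: nat_pow_inv)
next
  fix a b assume "a \<in> {z \<in> carrier G. z [^] p = \<one>}" "b \<in> {z \<in> carrier G. z [^] p = \<one>}"
  then show "a \<otimes> b \<in> {z \<in> carrier G. z [^] p = \<one>}" by (simp add: pow_mult_distrib m_comm)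
qed

theorem theorem4p1:
  fixes G :: "('a, 'b) monoid_scheme" and p n :: nat
  assumes "comm_group G" and "finite (carrier G)"
    and "Factorial_Ring.prime p" and "order G = p ^ n"
    and "\<not> cyclic_group G"
  shows "deep_commuting_eq_enhanced_power G \<longleftrightarrow> elementary_abelian G p"
proof
  have cg: "comm_group G" and fin: "finite (carrier G)" and p: "Factorial_Ring.prime p"
    and ordG: "order G = p ^ n" and nc: "\<not> cyclic_group G" using assms by auto
  interpret G: comm_group G by (rule cg)
  have p1: "p > 1" using p prime_gt_1_nat by blast
  assume eq: "deep_commuting_eq_enhanced_power G"
  show "elementary_abelian G p"
    unfolding elementary_abelian_def
  proof (intro conjI cg ballI impI)
    fix x assume xc: "x \<in> carrier G" and x1: "x \<noteq> \<one>\<^bsub>G\<^esub>"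
    show "group.ord G x = p"
    proof (rule ccontr)
    assume xo: "group.ord G x \<noteq> p"
    obtain h y0 where h: "h \<in> carrier G" and y0c: "y0 \<in> carrier G"
      and hp1: "h [^]\<^bsub>G\<^esub> p \<noteq> \<one>\<^bsub>G\<^esub>" and hpp: "(h [^]\<^bsub>G\<^esub> p) [^]\<^bsub>G\<^esub> p = \<one>\<^bsub>G\<^esub>"
      and y0p: "y0 [^]\<^bsub>G\<^esub> p = \<one>\<^bsub>G\<^esub>" and y0n: "\<forall>j::nat. y0 \<noteq> (h [^]\<^bsub>G\<^esub> p) [^]\<^bsub>G\<^esub> j"
      using G.nonelem_pair[OF fin p ordG nc xc x1 xo] by blast
    define x0 where "x0 = h [^]\<^bsub>G\<^esub> p"
    have x0c: "x0 \<in> carrier G" using h by (simp add: x0_def)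
    obtain H :: "nat monoid" and \<pi> where sc: "schur_cover G H \<pi>" using schur_exists[OF cg fin] by blast
    have st: "group H" "\<pi> \<in> hom H G" "\<pi> ` carrier H = carrier G" "kernel H G \<pi> \<subseteq> group_center H"
      using sc by (auto simp: schur_cover_def stem_extension_def)
    interpret S: stemx G H \<pi>
      using cg st by (simp add: stemx_def stemx_axioms_def comm_group_def)
    have x0y0: "x0 \<noteq> y0" using y0n[rule_format, of 1] x0c by (simp add: x0_def)
    have deep: "deep_commuting_adj G H \<pi> x0 y0"
      unfolding deep_commuting_adj_def
    proof (intro conjI ballI impI x0y0)
      fix x' y' assume x': "x' \<in> carrier H" and y': "y' \<in> carrier H" and px: "\<pi> x' = x0" and py: "\<pi> y' = y0"
      obtain h' where h': "h' \<in> carrier H" "\<pi> h' = h" using h st(3) by (metis imageE)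
      have ph: "\<pi> (h' [^]\<^bsub>H\<^esub> p) = x0" using h' by (simp add: S.pi_pow x0_def)
      have "\<pi> y' [^]\<^bsub>G\<^esub> p = \<one>\<^bsub>G\<^esub>" using py y0p by simp
      then have "h' [^]\<^bsub>H\<^esub> p \<otimes>\<^bsub>H\<^esub> y' = y' \<otimes>\<^bsub>H\<^esub> h' [^]\<^bsub>H\<^esub> p" using S.pow_comm[OF h'(1) y'] by simp
      then show "x' \<otimes>\<^bsub>H\<^esub> y' = y' \<otimes>\<^bsub>H\<^esub> x'"
        using S.lift_comm[of "h' [^]\<^bsub>H\<^esub> p" x' y' y'] h' x' y' ph px by simp
    qed
    have nenh: "\<not> enhanced_power_adj G x0 y0"
    proof
      assume "enhanced_power_adj G x0 y0"
      then have cyc: "cyclic_group (subgroup_generated G {x0, y0})" by (simp add: enhanced_power_adj_def)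
      have "generate G {x0, y0} \<subseteq> {z \<in> carrier G. z [^]\<^bsub>G\<^esub> p = \<one>\<^bsub>G\<^esub>}"
        by (rule G.generate_subgroup_incl) (use x0c y0c hpp y0p G.pexp_subgroup in \<open>auto simp: x0_def\<close>)
      then have ex: "\<forall>z\<in>generate G {x0, y0}. z [^]\<^bsub>G\<^esub> p = \<one>\<^bsub>G\<^esub>" by blast
      have "x0 \<noteq> \<one>\<^bsub>G\<^esub>" using hp1 by (simp add: x0_def)
      then obtain k :: nat where "y0 = x0 [^]\<^bsub>G\<^esub> k"
        using G.noncyclic_pair[OF x0c y0c p _ ex cyc] by blast
      then show False using y0n by (simp add: x0_def)
    qed
    have "deep_commuting_adj G H \<pi> x0 y0 \<longleftrightarrow> enhanced_power_adj G x0 y0"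
      using eq sc x0c y0c by (simp add: deep_commuting_eq_enhanced_power_def)
    then show False using deep nenh by simp
  qed
  qed
next
  have cg: "comm_group G" and fin: "finite (carrier G)" and p: "Factorial_Ring.prime p"
    using assms by auto
  interpret G: comm_group G by (rule cg)
  have p1: "p > 1" using p prime_gt_1_nat by blast
  assume el: "elementary_abelian G p"
  have expo: "g [^]\<^bsub>G\<^esub> p = \<one>\<^bsub>G\<^esub>" if g: "g \<in> carrier G" for g
  proof (cases "g = \<one>\<^bsub>G\<^esub>")
    case True then show ?thesis by simp
  next
    case False
    then have "G.ord g = p" using el g by (simp add: elementary_abelian_def)
    then show ?thesis using G.pow_ord_eq_1[OF g] by simp
  qed
  interpret E: elem G p
    using cg p expo fin by (simp add: elem_def elem_axioms_def)
  show "deep_commuting_eq_enhanced_power G"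
    unfolding deep_commuting_eq_enhanced_power_def
  proof (intro allI impI ballI)
    fix H :: "nat monoid" and \<pi> x y
    assume sc: "schur_cover G H \<pi>" and xc: "x \<in> carrier G" and yc: "y \<in> carrier G"
    have st: "group H" "\<pi> \<in> hom H G" "\<pi> ` carrier H = carrier G" "kernel H G \<pi> \<subseteq> group_center H"
      using sc by (auto simp: schur_cover_def stem_extension_def)
    interpret S: stemx G H \<pi>
      using cg st by (simp add: stemx_def stemx_axioms_def comm_group_def)
    show "deep_commuting_adj G H \<pi> x y \<longleftrightarrow> enhanced_power_adj G x y"
    proof
      assume "enhanced_power_adj G x y"
      then show "deep_commuting_adj G H \<pi> x y"
        using S.enh_imp_deep[OF xc yc] by (simp add: enhanced_power_adj_def deep_commuting_adj_def)
    next
      assume d: "deep_commuting_adj G H \<pi> x y"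
      have xy: "x \<noteq> y" using d by (simp add: deep_commuting_adj_def)
      have comm: "\<forall>x' \<in> carrier H. \<forall>y' \<in> carrier H. \<pi> x' = x \<longrightarrow> \<pi> y' = y \<longrightarrow>
          x' \<otimes>\<^bsub>H\<^esub> y' = y' \<otimes>\<^bsub>H\<^esub> x'"
        using d unfolding deep_commuting_adj_def by (rule conjunct2)
      show "enhanced_power_adj G x y"
        unfolding enhanced_power_adj_def
      proof (intro conjI xy)
        show "cyclic_group (subgroup_generated G {x, y})"
        proof (rule ccontr)
        assume nc: "\<not> cyclic_group (subgroup_generated G {x, y})"
        have x1: "x \<noteq> \<one>\<^bsub>G\<^esub>"
        proof
          assume x1: "x = \<one>\<^bsub>G\<^esub>"
          have "cyclic_group (subgroup_generated G {y, \<one>\<^bsub>G\<^esub>})"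
            using G.cyclic_pair[OF yc, of "\<one>\<^bsub>G\<^esub>" 0] by simp
          then show False using nc x1 by (simp add: insert_commute)
        qed
        have ynx: "\<forall>k::nat. y \<noteq> x [^]\<^bsub>G\<^esub> k"
        proof (intro allI notI)
          fix k :: nat assume "y = x [^]\<^bsub>G\<^esub> k"
          then have "cyclic_group (subgroup_generated G {x, y})" by (rule G.cyclic_pair[OF xc])
          then show False using nc by simp
        qed
        have xny: "\<forall>k::nat. x \<noteq> y [^]\<^bsub>G\<^esub> k"
        proof (intro allI notI)
          fix k :: nat assume "x = y [^]\<^bsub>G\<^esub> k"
          then obtain a where "y = x [^]\<^bsub>G\<^esub> (a::nat)"
            using G.prime_pow_inverse[OF xc yc expo[OF yc] p _ x1] by blast
          then show False using ynx by blast
        qed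
        have y1: "y \<noteq> \<one>\<^bsub>G\<^esub>" using ynx[rule_format, of 0] by simp
        have M0: "subgroup (E.ext_set {\<one>\<^bsub>G\<^esub>} y) G" by (rule E.ext_sub[OF G.triv_subgroup yc])
        have xM0: "x \<notin> E.ext_set {\<one>\<^bsub>G\<^esub>} y"
        proof
          assume "x \<in> E.ext_set {\<one>\<^bsub>G\<^esub>} y"
          then obtain m j where "m \<in> {\<one>\<^bsub>G\<^esub>}" "x = m \<otimes>\<^bsub>G\<^esub> y [^]\<^bsub>G\<^esub> (j::nat)" by (rule E.ext_setE)
          then have "x = y [^]\<^bsub>G\<^esub> j" using yc by simp
          then show False using xny by blast
        qed
        have yM0: "y \<in> E.ext_set {\<one>\<^bsub>G\<^esub>} y"
          using E.ext_setI[of "\<one>\<^bsub>G\<^esub>" "{\<one>\<^bsub>G\<^esub>}" 1 y] p1 yc by simp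
        obtain \<phi> where \<phi>: "\<forall>g\<in>carrier G. \<phi> g < p"
          "\<forall>g\<in>carrier G. \<forall>h\<in>carrier G. \<phi> (g \<otimes>\<^bsub>G\<^esub> h) = (\<phi> g + \<phi> h) mod p"
          "\<phi> x = 1" "\<forall>m\<in>E.ext_set {\<one>\<^bsub>G\<^esub>} y. \<phi> m = 0"
          using E.functional[OF M0 xc xM0] by blast
        have M1: "subgroup (E.ext_set {\<one>\<^bsub>G\<^esub>} x) G" by (rule E.ext_sub[OF G.triv_subgroup xc])
        have yM1: "y \<notin> E.ext_set {\<one>\<^bsub>G\<^esub>} x"
        proof
          assume "y \<in> E.ext_set {\<one>\<^bsub>G\<^esub>} x"
          then obtain m j where "m \<in> {\<one>\<^bsub>G\<^esub>}" "y = m \<otimes>\<^bsub>G\<^esub> x [^]\<^bsub>G\<^esub> (j::nat)" by (rule E.ext_setE)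
          then have "y = x [^]\<^bsub>G\<^esub> j" using xc by simp
          then show False using ynx by blast
        qed
        have xM1: "x \<in> E.ext_set {\<one>\<^bsub>G\<^esub>} x"
          using E.ext_setI[of "\<one>\<^bsub>G\<^esub>" "{\<one>\<^bsub>G\<^esub>}" 1 x] p1 xc by simp
        obtain \<psi> where \<psi>: "\<forall>g\<in>carrier G. \<psi> g < p"
          "\<forall>g\<in>carrier G. \<forall>h\<in>carrier G. \<psi> (g \<otimes>\<^bsub>G\<^esub> h) = (\<psi> g + \<psi> h) mod p"
          "\<psi> y = 1" "\<forall>m\<in>E.ext_set {\<one>\<^bsub>G\<^esub>} x. \<psi> m = 0"
          using E.functional[OF M1 yc yM1] by blast
        obtain x' where x': "x' \<in> carrier H" "\<pi> x' = x" using xc st(3) by (metis imageE)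
        obtain y' where y': "y' \<in> carrier H" "\<pi> y' = y" using yc st(3) by (metis imageE)
        have "x' \<otimes>\<^bsub>H\<^esub> y' \<noteq> y' \<otimes>\<^bsub>H\<^esub> x'"
          by (rule schur_comm_contra[OF cg sc p, of \<phi> \<psi>])
             (use \<phi> \<psi> x' y' yM0 xM1 in auto)
        then show False using comm[rule_format, OF x'(1) y'(1) x'(2) y'(2)] by simp
      qed
      qed
    qed
  qed
qed

end
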